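(* Let $1\in V$ be even, $\check T=(T,\bar T)$ a pair of even operators of $V$, and $a(\check z),b(\check z)\in\mathrm{End}(V)\{\check z\}$ creative (for $1$) and mutually local, with reduced-OPE pole orders $\check h_1,\dots,\check h_r$ of $a(\check z)b(\check w)$. Then for every $\check n\in\mathbb K^2$: (i) $a(\check z)_{(\check n)}b(\check z)$ is creative, and so is every numerator of the reduced OPE of $a(\check z)b(\check w)$; (ii) $a(\check z)s_1(b(\check z))\in\sum_{i=1}^r\check z^{-\check h_i}V[[\check z]]$; (iii) $s_1\big(a(\check z)_{(\check n)}b(\check z)\big)=a_{\check n}\,s_1(b(\check z))$; (iv) if $a(\check z)$ is translation covariant for $\check T$ and $b(\check z)$ is strongly creative for $1$ and $\check T$, then $a(\check z)_{(\check n)}b(\check z)$ is strongly creative for $1$ and $\check T$.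
   Context: $\mathbb K$ of characteristic $0$; super vector spaces, parity $\tilde a$, $\zeta=-1$. $\check z=(z,\bar z)$; $a(\check z)=\sum_{\check n\in\mathbb K^2}a_{\check n}z^{-n-1}\bar z^{-\bar n-1}$. A field gives a vertex series on each vector. $(\check z-\check w)^{\check h}=\sum_{\check i\in\mathbb N^2}(-1)^{i+\bar i}\binom hi\binom{\bar h}{\bar i}\check z^{\check h-\check i}\check w^{\check i}$, $\check{\mathbb K}=\{\check h:h-\bar h\in\mathbb Z\}$, $(\check z-\check w)^{\check h}_{w>z}=(-1)^{h-\bar h}(\check w-\check z)^{\check h}$. Mutually local: fields $c^i$, $\check h_i\in\check{\mathbb K}$ with $a(\check z)b(\check w)=\sum(\check z-\check w)^{-\check h_i}c^i$ and $\zeta^{\tilde a\tilde b}b(\check w)a(\check z)=\sum(\check z-\check w)^{-\check h_i}_{w>z}c^i$. Reduced OPE: $\check h_i-\check h_j\notin\mathbb Z^2$ ($i\neq j$) and no $(\check z-\check w)^{-\check n}c^i$, $\check n\in\mathbb N^2\setminus\{0\}$, a field; unique, its $c^i$ are the numerators and $\check h_i$ the pole orders. $\check n$-th product: $a(\check w)_{(\check n)}b(\check w)=\sum_i\partial_{\check z}^{(\check h_i-1-\check n)}c^i(\check z,\check w)|_{\check z=\check w}$ ($\partial^{(n)}=\partial^n/n!$ for $n\in\mathbb N$, else $0$; $1=(1,1)$). A distribution $a(\check z)$ (or $c(\check z,\check w)$) is creative if its value on $1$ is a power series; $s_1(a(\check z)):=a_{(-1,-1)}1$; strongly creative for $1,\check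 T$: $a(\check z)1=e^{zT+\bar z\bar T}s_1(a(\check z))$; translation covariant for $\check T$: $[T,a(\check z)]=\partial_za(\check z)$ and $[\bar T,a(\check z)]=\partial_{\bar z}a(\check z)$. *)

theory Defs
  imports Complex_Main "HOL-Library.Groups_Big_Fun"
begin

(* The super structure on V is given by its grading involution sigma
   (V_0 = fixed points, V_1 = (-1)-eigenspace).
   Pairs check-n = (n, nbar) :: 'k * 'k.
   A distribution a(z) in End(V){z} is a map  a :: 'k*'k => 'v => 'v,  a n = a_n
   (coefficient of z^(-n-1) zbar^(-nbar-1)).
   A two-variable distribution c(z,w) is  c :: 'k*'k => 'k*'k => 'v => 'v,
   c n m = coefficient of z^(-n-1) zbar^(-nbar-1) w^(-m-1) wbar^(-mbar-1).
   V-valued series are indexed by the exponent of the monomial. *)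

type_synonym ('k,'v) dist1 = "'k \<times> 'k \<Rightarrow> 'v \<Rightarrow> 'v"
type_synonym ('k,'v) dist2 = "'k \<times> 'k \<Rightarrow> 'k \<times> 'k \<Rightarrow> 'v \<Rightarrow> 'v"

definition negm1 :: "'k::field \<times> 'k \<Rightarrow> 'k \<times> 'k" where
  "negm1 p = (- fst p - 1, - snd p - 1)"

definition negp :: "'k::field \<times> 'k \<Rightarrow> 'k \<times> 'k" where
  "negp p = (- fst p, - snd p)"

definition in_trans :: "'k::field \<times> 'k \<Rightarrow> 'k \<times> 'k \<Rightarrow> bool" where
  "in_trans h p \<longleftrightarrow> (\<exists>i j::nat. p = (fst h + of_nat i, snd h + of_nat j))"

definition chkK :: "('k::field_char_0 \<times> 'k) set" where
  "chkK = {h. \<exists>k::int. fst h - snd h = of_int k}"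

definition chk_sign :: "'k::field_char_0 \<times> 'k \<Rightarrow> 'k" where
  "chk_sign h = (-1) powi (THE k::int. fst h - snd h = of_int k)"

definition super_space :: "('k::field_char_0 \<Rightarrow> 'v::ab_group_add \<Rightarrow> 'v) \<Rightarrow> ('v \<Rightarrow> 'v) \<Rightarrow> bool" where
  "super_space scale \<sigma> \<longleftrightarrow> vector_space scale \<and> Vector_Spaces.linear scale scale \<sigma> \<and> (\<forall>v. \<sigma> (\<sigma> v) = v)"

definition even_vec :: "('v \<Rightarrow> 'v) \<Rightarrow> 'v \<Rightarrow> bool" where
  "even_vec \<sigma> v \<longleftrightarrow> \<sigma> v = v"

definition even_op :: "('k::field_char_0 \<Rightarrow> 'v::ab_group_add \<Rightarrow> 'v) \<Rightarrow> ('v \<Rightarrow> 'v) \<Rightarrow> ('v \<Rightarrow> 'v) \<Rightarrow> bool" where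
  "even_op scale \<sigma> T \<longleftrightarrow> Vector_Spaces.linear scale scale T \<and> (\<forall>v. \<sigma> (T v) = T (\<sigma> v))"

definition End_dist1 :: "('k::field_char_0 \<Rightarrow> 'v::ab_group_add \<Rightarrow> 'v) \<Rightarrow> ('k,'v) dist1 \<Rightarrow> bool" where
  "End_dist1 scale a \<longleftrightarrow> (\<forall>n. Vector_Spaces.linear scale scale (a n))"

definition End_dist2 :: "('k::field_char_0 \<Rightarrow> 'v::ab_group_add \<Rightarrow> 'v) \<Rightarrow> ('k,'v) dist2 \<Rightarrow> bool" where
  "End_dist2 scale c \<longleftrightarrow> (\<forall>n m. Vector_Spaces.linear scale scale (c n m))"

text \<open>homogeneous of parity p (True = odd)\<close>
definition homog :: "('v::ab_group_add \<Rightarrow> 'v) \<Rightarrow> bool \<Rightarrow> ('k,'v) dist1 \<Rightarrow> bool" where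
  "homog \<sigma> p a \<longleftrightarrow> (\<forall>n v. \<sigma> (a n v) = (if p then - a n (\<sigma> v) else a n (\<sigma> v)))"

definition ser1 :: "('k::field,'v) dist1 \<Rightarrow> 'v \<Rightarrow> 'k \<times> 'k \<Rightarrow> 'v" where
  "ser1 a v p = a (negm1 p) v"

definition ser2 :: "('k::field,'v) dist2 \<Rightarrow> 'v \<Rightarrow> 'k \<times> 'k \<Rightarrow> 'k \<times> 'k \<Rightarrow> 'v" where
  "ser2 c v p q = c (negm1 p) (negm1 q) v"

text \<open>vertex series: finite sums of z^h V[[z]] (resp. z^h w^k V[[z,w]])\<close>
definition vseries1 :: "('k::field \<times> 'k \<Rightarrow> 'v::zero) \<Rightarrow> bool" where
  "vseries1 f \<longleftrightarrow> (\<exists>H. finite H \<and> (\<forall>p. f p \<noteq> 0 \<longrightarrow> (\<exists>h\<in>H. in_trans h p)))"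

definition vseries2 :: "('k::field \<times> 'k \<Rightarrow> 'k \<times> 'k \<Rightarrow> 'v::zero) \<Rightarrow> bool" where
  "vseries2 F \<longleftrightarrow> (\<exists>H. finite H \<and>
     (\<forall>p q. F p q \<noteq> 0 \<longrightarrow> (\<exists>hk\<in>H. in_trans (fst hk) p \<and> in_trans (snd hk) q)))"

definition field1 :: "('k::field_char_0 \<Rightarrow> 'v::ab_group_add \<Rightarrow> 'v) \<Rightarrow> ('k,'v) dist1 \<Rightarrow> bool" where
  "field1 scale a \<longleftrightarrow> End_dist1 scale a \<and> (\<forall>v. vseries1 (ser1 a v))"

definition field2 :: "('k::field_char_0 \<Rightarrow> 'v::ab_group_add \<Rightarrow> 'v) \<Rightarrow> ('k,'v) dist2 \<Rightarrow> bool" where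
  "field2 scale c \<longleftrightarrow> End_dist2 scale c \<and> (\<forall>v. vseries2 (ser2 c v))"

text \<open>coefficient of z^p w^q in (z-w)^h F (expansion in nonnegative powers of w)\<close>
definition mulZW :: "('k::field_char_0 \<Rightarrow> 'v::ab_group_add \<Rightarrow> 'v) \<Rightarrow> 'k \<times> 'k \<Rightarrow>
    ('k \<times> 'k \<Rightarrow> 'k \<times> 'k \<Rightarrow> 'v) \<Rightarrow> 'k \<times> 'k \<Rightarrow> 'k \<times> 'k \<Rightarrow> 'v" where
  "mulZW scale h F p q = (\<Sum>ij. scale ((-1) ^ (fst ij + snd ij) * (fst h gchoose fst ij) * (snd h gchoose snd ij))
      (F (fst p - fst h + of_nat (fst ij), snd p - snd h + of_nat (snd ij))
         (fst q - of_nat (fst ij), snd q - of_nat (snd ij))))"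

text \<open>coefficient of z^p w^q in (z-w)^h_{w>z} F = (-1)^(h-hbar) (w-z)^h F\<close>
definition mulWZ :: "('k::field_char_0 \<Rightarrow> 'v::ab_group_add \<Rightarrow> 'v) \<Rightarrow> 'k \<times> 'k \<Rightarrow>
    ('k \<times> 'k \<Rightarrow> 'k \<times> 'k \<Rightarrow> 'v) \<Rightarrow> 'k \<times> 'k \<Rightarrow> 'k \<times> 'k \<Rightarrow> 'v" where
  "mulWZ scale h F p q = scale (chk_sign h) (\<Sum>ij. scale ((-1) ^ (fst ij + snd ij) * (fst h gchoose fst ij) * (snd h gchoose snd ij))
      (F (fst p - of_nat (fst ij), snd p - of_nat (snd ij))
         (fst q - fst h + of_nat (fst ij), snd q - snd h + of_nat (snd ij))))"

definition mulZW_dist :: "('k::field_char_0 \<Rightarrow> 'v::ab_group_add \<Rightarrow> 'v) \<Rightarrow> 'k \<times> 'k \<Rightarrow> ('k,'v) dist2 \<Rightarrow> ('k,'v) dist2" where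
  "mulZW_dist scale h c = (\<lambda>n m v. mulZW scale h (ser2 c v) (negm1 n) (negm1 m))"

definition local_data :: "('k::field_char_0 \<Rightarrow> 'v::ab_group_add \<Rightarrow> 'v) \<Rightarrow> ('v \<Rightarrow> 'v) \<Rightarrow>
    ('k,'v) dist1 \<Rightarrow> ('k,'v) dist1 \<Rightarrow> nat \<Rightarrow> (nat \<Rightarrow> 'k \<times> 'k) \<Rightarrow> (nat \<Rightarrow> ('k,'v) dist2) \<Rightarrow> bool" where
  "local_data scale \<sigma> a b r h c \<longleftrightarrow> (\<exists>pa pb. homog \<sigma> pa a \<and> homog \<sigma> pb b \<and>
     (\<forall>i<r. field2 scale (c i) \<and> h i \<in> chkK) \<and>
     (\<forall>v p q. a (negm1 p) (b (negm1 q) v) = (\<Sum>i<r. mulZW scale (negp (h i)) (ser2 (c i) v) p q)) \<and>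
     (\<forall>v p q. scale (if pa \<and> pb then -1 else 1) (b (negm1 q) (a (negm1 p) v))
                = (\<Sum>i<r. mulWZ scale (negp (h i)) (ser2 (c i) v) p q)))"

definition mutually_local :: "('k::field_char_0 \<Rightarrow> 'v::ab_group_add \<Rightarrow> 'v) \<Rightarrow> ('v \<Rightarrow> 'v) \<Rightarrow>
    ('k,'v) dist1 \<Rightarrow> ('k,'v) dist1 \<Rightarrow> bool" where
  "mutually_local scale \<sigma> a b \<longleftrightarrow> (\<exists>r h c. local_data scale \<sigma> a b r h c)"

text \<open>(r, h, c) is the reduced OPE of a(z)b(w): pole orders h i, numerators c i\<close>
definition reduced_OPE :: "('k::field_char_0 \<Rightarrow> 'v::ab_group_add \<Rightarrow> 'v) \<Rightarrow> ('v \<Rightarrow> 'v) \<Rightarrow>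
    ('k,'v) dist1 \<Rightarrow> ('k,'v) dist1 \<Rightarrow> nat \<Rightarrow> (nat \<Rightarrow> 'k \<times> 'k) \<Rightarrow> (nat \<Rightarrow> ('k,'v) dist2) \<Rightarrow> bool" where
  "reduced_OPE scale \<sigma> a b r h c \<longleftrightarrow> local_data scale \<sigma> a b r h c \<and>
     (\<forall>i<r. \<forall>j<r. i \<noteq> j \<longrightarrow>
        \<not> (\<exists>k l::int. fst (h i) - fst (h j) = of_int k \<and> snd (h i) - snd (h j) = of_int l)) \<and>
     (\<forall>i<r. \<forall>na nb::nat. (na, nb) \<noteq> (0, 0) \<longrightarrow>
        \<not> field2 scale (mulZW_dist scale (- of_nat na, - of_nat nb) (c i)))"

text \<open>coefficient of w^e in (d_z^(ka) d_zbar^(kb)/(ka! kb!) F)(w,w)\<close>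
definition diag_der :: "('k::field_char_0 \<Rightarrow> 'v::ab_group_add \<Rightarrow> 'v) \<Rightarrow> nat \<Rightarrow> nat \<Rightarrow>
    ('k \<times> 'k \<Rightarrow> 'k \<times> 'k \<Rightarrow> 'v) \<Rightarrow> 'k \<times> 'k \<Rightarrow> 'v" where
  "diag_der scale ka kb F e = (\<Sum>p. scale (((fst p + of_nat ka) gchoose ka) * ((snd p + of_nat kb) gchoose kb))
      (F (fst p + of_nat ka, snd p + of_nat kb) (fst e - fst p, snd e - snd p)))"

text \<open>the n-th product a(w)_(n) b(w) computed from the reduced OPE (r, h, c)\<close>
definition nth_prod :: "('k::field_char_0 \<Rightarrow> 'v::ab_group_add \<Rightarrow> 'v) \<Rightarrow> nat \<Rightarrow> (nat \<Rightarrow> 'k \<times> 'k) \<Rightarrow>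
    (nat \<Rightarrow> ('k,'v) dist2) \<Rightarrow> 'k \<times> 'k \<Rightarrow> ('k,'v) dist1" where
  "nth_prod scale r h c n = (\<lambda>m v. \<Sum>i<r. \<Sum>k.
      (if fst (h i) - 1 - fst n = of_nat (fst k) \<and> snd (h i) - 1 - snd n = of_nat (snd k)
       then diag_der scale (fst k) (snd k) (ser2 (c i) v) (negm1 m) else 0))"

definition creative1 :: "'v::zero \<Rightarrow> ('k::field,'v) dist1 \<Rightarrow> bool" where
  "creative1 one a \<longleftrightarrow> (\<forall>n. a n one \<noteq> 0 \<longrightarrow> in_trans (0, 0) (negm1 n))"

definition creative2 :: "'v::zero \<Rightarrow> ('k::field,'v) dist2 \<Rightarrow> bool" where
  "creative2 one c \<longleftrightarrow> (\<forall>n m. c n m one \<noteq> 0 \<longrightarrow> in_trans (0, 0) (negm1 n) \<and> in_trans (0, 0) (negm1 m))"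

definition s1 :: "'v \<Rightarrow> ('k::field,'v) dist1 \<Rightarrow> 'v" where
  "s1 one a = a (-1, -1) one"

text \<open>translation covariance: [T, a(z)] = d_z a(z), [Tbar, a(z)] = d_zbar a(z)\<close>
definition transl_cov :: "('k::field_char_0 \<Rightarrow> 'v::ab_group_add \<Rightarrow> 'v) \<Rightarrow> ('v \<Rightarrow> 'v) \<Rightarrow> ('v \<Rightarrow> 'v) \<Rightarrow> ('k,'v) dist1 \<Rightarrow> bool" where
  "transl_cov scale T Tb a \<longleftrightarrow> (\<forall>n v.
     T (a n v) - a n (T v) = scale (- fst n) (a (fst n - 1, snd n) v) \<and>
     Tb (a n v) - a n (Tb v) = scale (- snd n) (a (fst n, snd n - 1) v))"

text \<open>expW T Tb i j = coefficient of z^i zbar^j in (z T + zbar Tbar)^(i+j) (noncommutative)\<close>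
fun expW :: "('v::ab_group_add \<Rightarrow> 'v) \<Rightarrow> ('v \<Rightarrow> 'v) \<Rightarrow> nat \<Rightarrow> nat \<Rightarrow> 'v \<Rightarrow> 'v" where
  "expW T Tb 0 0 v = v"
| "expW T Tb (Suc i) 0 v = T (expW T Tb i 0 v)"
| "expW T Tb 0 (Suc j) v = Tb (expW T Tb 0 j v)"
| "expW T Tb (Suc i) (Suc j) v = T (expW T Tb i (Suc j) v) + Tb (expW T Tb (Suc i) j v)"

text \<open>strongly creative: a(z)1 = exp(z T + zbar Tbar) s_1(a)\<close>
definition strongly_creative :: "('k::field_char_0 \<Rightarrow> 'v::ab_group_add \<Rightarrow> 'v) \<Rightarrow> 'v \<Rightarrow> ('v \<Rightarrow> 'v) \<Rightarrow> ('v \<Rightarrow> 'v) \<Rightarrow> ('k,'v) dist1 \<Rightarrow> bool" where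
  "strongly_creative scale one T Tb a \<longleftrightarrow> creative1 one a \<and>
     (\<forall>i j::nat. a (negm1 (of_nat i, of_nat j)) one
        = scale (inverse (fact (i + j))) (expW T Tb i j (s1 one a)))"

end

theory Submission
  imports Defs "HOL-Computational_Algebra.Computational_Algebra"
begin

lemma fps_binomial_deriv': "fps_deriv (fps_binomial (g::'k::field_char_0)) = fps_const g * fps_binomial (g - 1)"
proof (rule fps_ext)
  fix n
  show "fps_deriv (fps_binomial g) $ n = (fps_const g * fps_binomial (g - 1)) $ n"
    using gbinomial_absorption[of n g] by (simp add: mult.commute)
qed

definition psi1 :: "'k::field_char_0 \<Rightarrow> 'k poly \<Rightarrow> 'k poly" where
  "psi1 g Q = smult g Q + [:1,1:] * pderiv Q"

lemma deriv_binom_poly: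
  "fps_deriv (fps_binomial (g::'k::field_char_0) * fps_of_poly Q) = fps_binomial (g - 1) * fps_of_poly (psi1 g Q)"
proof -
  have b: "fps_binomial g = fps_binomial (g - 1) * (1 + fps_X)"
    using fps_binomial_add_mult[of "g - 1" 1] by (simp add: fps_binomial_1)
  have p: "fps_of_poly ([:1,1:] :: 'k poly) = 1 + fps_X"
    by (simp add: fps_of_poly_pCons)
  show ?thesis
    unfolding psi1_def fps_deriv_mult fps_binomial_deriv' fps_of_poly_add fps_of_poly_mult
      fps_of_poly_smult fps_of_poly_pderiv p
    by (subst b) (simp add: algebra_simps)
qed

fun psiN :: "nat \<Rightarrow> 'k::field_char_0 \<Rightarrow> 'k poly \<Rightarrow> 'k poly" where
  "psiN 0 g Q = Q"
| "psiN (Suc n) g Q = psi1 (g - of_nat n) (psiN n g Q)"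

lemma derivN_binom_poly:
  "(fps_deriv ^^ n) (fps_binomial (g::'k::field_char_0) * fps_of_poly Q) = fps_binomial (g - of_nat n) * fps_of_poly (psiN n g Q)"
proof (induction n)
  case 0 then show ?case by simp
next
  case (Suc n)
  have "(fps_deriv ^^ Suc n) (fps_binomial g * fps_of_poly Q) = fps_deriv (fps_binomial (g - of_nat n) * fps_of_poly (psiN n g Q))"
    using Suc by simp
  also have "\<dots> = fps_binomial (g - of_nat n - 1) * fps_of_poly (psiN (Suc n) g Q)"
    by (simp only: deriv_binom_poly psiN.simps)
  finally show ?case by (simp add: algebra_simps)
qed

lemma psi1_nonzero:
  assumes "Q \<noteq> 0" "(g::'k::field_char_0) \<notin> \<int>"
  shows "psi1 g Q \<noteq> 0"
proof -
  let ?d = "degree Q"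
  have lc: "coeff Q ?d \<noteq> 0" using assms by simp
  have c1: "coeff (pderiv Q) ?d = 0" by (simp add: coeff_pderiv coeff_eq_0)
  have c2: "coeff ([:1,1:] * pderiv Q) ?d = of_nat ?d * coeff Q ?d"
  proof (cases ?d)
    case 0 then show ?thesis using c1 by (simp add: mult_pCons_left)
  next
    case (Suc k) then show ?thesis using c1 by (simp add: coeff_pderiv mult_pCons_left)
  qed
  have "coeff (psi1 g Q) ?d = (g + of_nat ?d) * coeff Q ?d"
    unfolding psi1_def using c2 by (simp add: algebra_simps)
  moreover have "g + of_nat ?d \<noteq> 0"
  proof
    assume "g + of_nat ?d = 0"
    then have "g = - of_nat ?d" by (simp add: eq_neg_iff_add_eq_0)
    then have "g \<in> \<int>" by simp
    with assms show False by simp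
  qed
  ultimately show ?thesis using lc by auto
qed

lemma psiN_nonzero:
  assumes "Q \<noteq> 0" "(g::'k::field_char_0) \<notin> \<int>"
  shows "psiN n g Q \<noteq> 0"
proof (induction n)
  case 0 then show ?case using assms by simp
next
  case (Suc n)
  have "g - of_nat n \<notin> \<int>"
  proof
    assume "g - of_nat n \<in> \<int>"
    then have "g - of_nat n + of_nat n \<in> \<int>" by (intro Ints_add) auto
    with assms show False by simp
  qed
  then show ?case using Suc.IH psi1_nonzero[of "psiN n g Q" "g - of_nat n"] by simp
qed

lemma derivN_sum: "(fps_deriv ^^ n) (\<Sum>i\<in>A. f i) = (\<Sum>i\<in>A. (fps_deriv ^^ n) (f i))"
  by (induction n) (simp_all add: fps_deriv_sum)

lemma derivN_add: "(fps_deriv ^^ n) (a + b) = (fps_deriv ^^ n) a + (fps_deriv ^^ n) b"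
  by (induction n) simp_all

lemma pderivN_degree: "degree ((pderiv ^^ n) (Q::'k::field_char_0 poly)) = degree Q - n"
  by (induction n) (auto simp: degree_pderiv)

lemma pderivN_zero: "(pderiv ^^ Suc (degree Q)) (Q :: 'k::field_char_0 poly) = 0"
proof -
  have "degree ((pderiv ^^ degree Q) Q) = 0" by (simp add: pderivN_degree)
  then show ?thesis by (simp add: pderiv_eq_0_iff)
qed

lemma fps_of_poly_pderivN: "fps_of_poly ((pderiv ^^ n) Q) = (fps_deriv ^^ n) (fps_of_poly Q)"
  by (induction n) (simp_all add: fps_of_poly_pderiv)

lemma minus_notin_Ints:
  assumes "(a::'k::field_char_0) - b \<notin> \<int>" shows "b - a \<notin> \<int>"
proof
  assume "b - a \<in> \<int>" then have "- (b - a) \<in> \<int>" by (rule Ints_minus)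
  with assms show False by simp
qed

lemma core1:
  fixes \<alpha> :: "nat \<Rightarrow> 'k::field_char_0" and Q :: "nat \<Rightarrow> 'k poly"
  assumes "\<forall>i<m. \<forall>j<m. i \<noteq> j \<longrightarrow> \<alpha> i - \<alpha> j \<notin> \<int>"
    and "(\<Sum>i<m. fps_binomial (\<alpha> i) * fps_of_poly (Q i)) = 0"
  shows "\<forall>i<m. Q i = 0"
  using assms
proof (induction m arbitrary: \<alpha> Q)
  case 0 then show ?case by simp
next
  case (Suc m)
  define \<gamma> where "\<gamma> i = \<alpha> i - \<alpha> m" for i
  define N where "N = Suc (degree (Q m))"
  have eq0: "fps_binomial (- \<alpha> m) * (\<Sum>i<Suc m. fps_binomial (\<alpha> i) * fps_of_poly (Q i)) = 0"
    using Suc.prems(2) by simp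
  have eqx: "fps_binomial (- \<alpha> m) * (\<Sum>i<Suc m. fps_binomial (\<alpha> i) * fps_of_poly (Q i))
     = (\<Sum>i<m. fps_binomial (\<gamma> i) * fps_of_poly (Q i)) + fps_of_poly (Q m)"
  proof -
    have bb: "fps_binomial (- \<alpha> m) * fps_binomial (\<alpha> i) = fps_binomial (\<gamma> i)" for i
      by (simp add: \<gamma>_def fps_binomial_add_mult[symmetric])
    have bb2: "fps_binomial (- \<alpha> m) * fps_binomial (\<alpha> m) = 1"
      by (simp add: fps_binomial_add_mult[symmetric])
    show ?thesis
      using bb2 by (simp add: distrib_left sum_distrib_left mult.assoc[symmetric] bb)
  qed
  have eq1: "(\<Sum>i<m. fps_binomial (\<gamma> i) * fps_of_poly (Q i)) + fps_of_poly (Q m) = 0"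
    using eq0 unfolding eqx .
  have "(fps_deriv ^^ N) ((\<Sum>i<m. fps_binomial (\<gamma> i) * fps_of_poly (Q i)) + fps_of_poly (Q m)) = 0"
    using derivN_sum[where A="{}" and n=N] by (simp add: eq1)
  then have "(\<Sum>i<m. fps_binomial (\<gamma> i - of_nat N) * fps_of_poly (psiN N (\<gamma> i) (Q i))) = 0"
    unfolding derivN_add derivN_sum derivN_binom_poly fps_of_poly_pderivN[symmetric] N_def pderivN_zero
    by simp
  moreover have "\<forall>i<m. \<forall>j<m. i \<noteq> j \<longrightarrow> (\<gamma> i - of_nat N) - (\<gamma> j - of_nat N) \<notin> \<int>"
    using Suc.prems(1) by (simp add: \<gamma>_def)
  ultimately have z: "\<forall>i<m. psiN N (\<gamma> i) (Q i) = 0"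
    using Suc.IH[of "\<lambda>i. \<gamma> i - of_nat N" "\<lambda>i. psiN N (\<gamma> i) (Q i)"] by blast
  have qi: "\<forall>i<m. Q i = 0"
  proof (intro allI impI)
    fix i assume "i < m"
    then have "\<gamma> i \<notin> \<int>" using Suc.prems(1) by (simp add: \<gamma>_def)
    then show "Q i = 0" using psiN_nonzero z \<open>i < m\<close> by blast
  qed
  then have "fps_of_poly (Q m) = 0" using eq1 by simp
  then have "Q m = 0" by simp
  then show ?case using qi less_Suc_eq by auto
qed


locale vsk = vector_space scale for scale :: "'k::field_char_0 \<Rightarrow> 'v::ab_group_add \<Rightarrow> 'v"
begin

lemma exists_functional:
  assumes "v \<noteq> 0"
  shows "\<exists>\<phi>. Vector_Spaces.linear scale (*) \<phi> \<and> \<phi> v \<noteq> 0"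
proof -
  have "independent {v}" using assms by simp
  then obtain B where B: "{v} \<subseteq> B" "independent B" "UNIV \<subseteq> span B"
    using maximal_independent_subset_extend[of "{v}" UNIV] by auto
  then have lin: "Vector_Spaces.linear scale (*) (\<lambda>x. representation B x v)"
    using linear_representation by auto
  have "representation B v v = 1" using representation_basis[OF B(2)] B(1) by simp
  then show ?thesis using lin by (intro exI[of _ "\<lambda>x. representation B x v"]) simp
qed

end

lemma lin_add: "Vector_Spaces.linear sa sb f \<Longrightarrow> f (x + y) = f x + f y"
  by (simp add: Vector_Spaces.linear_iff_module_hom module_hom.add)
lemma lin_scale: "Vector_Spaces.linear sa sb f \<Longrightarrow> f (sa r x) = sb r (f x)"
  by (simp add: Vector_Spaces.linear_iff_module_hom module_hom.scale)
lemma lin_sum: "Vector_Spaces.linear sa sb f \<Longrightarrow> f (sum g A) = (\<Sum>x\<in>A. f (g x))"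
  by (simp add: Vector_Spaces.linear_iff_module_hom module_hom.sum)
lemma lin_zero: "Vector_Spaces.linear sa sb f \<Longrightarrow> f 0 = 0"
  by (simp add: Vector_Spaces.linear_iff_module_hom module_hom.zero)

definition cZ :: "'k::field_char_0 \<times> 'k \<Rightarrow> nat \<times> nat \<Rightarrow> 'k" where
  "cZ h ij = (-1) ^ (fst ij + snd ij) * ((- fst h) gchoose fst ij) * ((- snd h) gchoose snd ij)"

lemma mulZW_negp:
  "mulZW scale (negp h) F p q = Sum_any (\<lambda>ij. scale (cZ h ij)
      (F (fst p + fst h + of_nat (fst ij), snd p + snd h + of_nat (snd ij))
         (fst q - of_nat (fst ij), snd q - of_nat (snd ij))))"
  by (simp add: mulZW_def negp_def cZ_def)

lemma fin_slice:
  fixes F :: "'k::field_char_0 \<times> 'k \<Rightarrow> 'k \<times> 'k \<Rightarrow> 'v::zero"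
  assumes "vseries2 F"
  shows "finite {f. F (c1 - fst f, c2 - snd f) f \<noteq> 0}"
proof -
  obtain H where H: "finite H" "\<forall>p q. F p q \<noteq> 0 \<longrightarrow> (\<exists>hk\<in>H. in_trans (fst hk) p \<and> in_trans (snd hk) q)"
    using assms unfolding vseries2_def by blast
  define S where "S hk = {f. in_trans (fst hk) (c1 - fst f, c2 - snd f) \<and> in_trans (snd hk) f}" for hk
  have finS: "finite (S hk)" for hk
  proof (cases "S hk = {}")
    case True then show ?thesis by simp
  next
    case False
    then obtain f0 where "f0 \<in> S hk" by blast
    then obtain a1 a2 b1 b2 :: nat where f0:
      "(c1 - fst f0, c2 - snd f0) = (fst (fst hk) + of_nat a1, snd (fst hk) + of_nat a2)"
      "f0 = (fst (snd hk) + of_nat b1, snd (snd hk) + of_nat b2)"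
      unfolding S_def in_trans_def by blast
    have "S hk \<subseteq> (\<lambda>b. (fst (snd hk) + of_nat (fst b), snd (snd hk) + of_nat (snd b))) ` ({..a1+b1} \<times> {..a2+b2})"
    proof
      fix f assume "f \<in> S hk"
      then obtain x1 x2 y1 y2 :: nat where f:
        "(c1 - fst f, c2 - snd f) = (fst (fst hk) + of_nat x1, snd (fst hk) + of_nat x2)"
        "f = (fst (snd hk) + of_nat y1, snd (snd hk) + of_nat y2)"
        unfolding S_def in_trans_def by blast
      have "(of_nat (x1 + y1) :: 'k) = of_nat (a1 + b1)"
        using f f0 by (auto simp: algebra_simps)
      then have e1: "x1 + y1 = a1 + b1" using of_nat_eq_iff by blast
      have "(of_nat (x2 + y2) :: 'k) = of_nat (a2 + b2)"
        using f f0 by (auto simp: algebra_simps)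
      then have e2: "x2 + y2 = a2 + b2" using of_nat_eq_iff by blast
      show "f \<in> (\<lambda>b. (fst (snd hk) + of_nat (fst b), snd (snd hk) + of_nat (snd b))) ` ({..a1+b1} \<times> {..a2+b2})"
        using e1 e2 f(2) by (intro image_eqI[of _ _ "(y1, y2)"]) auto
    qed
    then show ?thesis by (rule finite_subset) simp
  qed
  have "{f. F (c1 - fst f, c2 - snd f) f \<noteq> 0} \<subseteq> (\<Union>hk\<in>H. S hk)"
    using H(2) unfolding S_def by fastforce
  then show ?thesis using finS H(1) by (meson finite_UN_I finite_subset)
qed

lemma dist_from_chkK:
  assumes "h i \<in> chkK" "h j \<in> chkK"
    "\<not> (\<exists>k l::int. fst (h i) - fst (h j) = of_int k \<and> snd (h i) - snd (h j) = of_int l)"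
  shows "fst (h i) - fst (h j) \<notin> (\<int>::'k::field_char_0 set)"
proof
  assume "fst (h i) - fst (h j) \<in> \<int>"
  then obtain k where k: "fst (h i) - fst (h j) = of_int k" by (auto elim: Ints_cases)
  obtain a where a: "fst (h i) - snd (h i) = of_int a" using assms(1) unfolding chkK_def by blast
  obtain b where b: "fst (h j) - snd (h j) = of_int b" using assms(2) unfolding chkK_def by blast
  have "snd (h i) - snd (h j) = of_int (k - a + b)"
    using k a b by (simp add: algebra_simps)
  with k assms(3) show False by blast
qed


context vsk
begin

lemma HL:
  fixes G :: "nat \<Rightarrow> 'k \<times> 'k \<Rightarrow> 'k \<times> 'k \<Rightarrow> 'v"
  assumes vs: "\<forall>i<r. vseries2 (G i)"
    and dist: "\<forall>i<r. \<forall>j<r. i \<noteq> j \<longrightarrow> fst (h i) - fst (h j) \<notin> \<int>"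
    and eq: "\<forall>p q. (\<Sum>i<r. mulZW scale (negp (h i)) (G i) p q) = 0"
  shows "\<forall>i<r. \<forall>p q. G i p q = 0"
proof (rule ccontr)
  assume "\<not> (\<forall>i<r. \<forall>p q. G i p q = 0)"
  then obtain i0 p0 q0 where i0: "i0 < r" and G0: "G i0 p0 q0 \<noteq> 0" by auto
  define t1 where "t1 = fst p0 + fst q0 - fst (h i0)"
  define t2 where "t2 = snd p0 + snd q0 - snd (h i0)"
  define g where "g i f = G i (t1 + fst (h i) - fst f, t2 + snd (h i) - snd f) f" for i f
  have g_eq: "(\<Sum>i<r. Sum_any (\<lambda>ij. scale (cZ (h i) ij)
       (g i (fst q - of_nat (fst ij), snd q - of_nat (snd ij))))) = 0" for q
  proof -
    have "(\<Sum>i<r. mulZW scale (negp (h i)) (G i) (t1 - fst q, t2 - snd q) q) = 0" using eq by blast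
    moreover have "mulZW scale (negp (h i)) (G i) (t1 - fst q, t2 - snd q) q =
      Sum_any (\<lambda>ij. scale (cZ (h i) ij) (g i (fst q - of_nat (fst ij), snd q - of_nat (snd ij))))" for i
      unfolding mulZW_negp g_def by (rule Sum_any.cong) (simp add: algebra_simps)
    ultimately show ?thesis by simp
  qed
  have g_fin: "finite {f. g i f \<noteq> 0}" if "i < r" for i
    unfolding g_def using fin_slice[OF vs[rule_format, OF that]] by simp
  have g0: "g i0 q0 \<noteq> 0" using G0 by (simp add: g_def t1_def t2_def)
  define S where "S = (\<Union>i<r. {f. g i f \<noteq> 0})"
  have finS: "finite S" unfolding S_def using g_fin by auto
  define emb where "emb k = (fst q0 + of_int (fst k), snd q0 + of_int (snd k))" for k :: "int \<times> int"
  have inj_emb: "inj emb" unfolding emb_def by (auto intro!: injI simp: prod_eq_iff)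
  define Kset where "Kset = emb -` S"
  have finK: "finite Kset" unfolding Kset_def using finS inj_emb by (simp add: finite_vimageI)
  define M :: nat where "M = Max (insert 0 ((\<lambda>k. nat \<bar>fst k\<bar>) ` Kset \<union> (\<lambda>k. nat \<bar>snd k\<bar>) ` Kset))"
  have M1: "nat \<bar>fst k\<bar> \<le> M" "nat \<bar>snd k\<bar> \<le> M" if "k \<in> Kset" for k
    unfolding M_def using finK that by (auto intro!: Max_ge)
  define B1 where "B1 = fst q0 - of_nat M"
  define B2 where "B2 = snd q0 - of_nat M"
  have below: "0 \<le> k1 \<and> 0 \<le> k2" if "i < r" "g i (B1 + of_int k1, B2 + of_int k2) \<noteq> 0" for i k1 k2
  proof -
    have "(B1 + of_int k1, B2 + of_int k2) = emb (k1 - int M, k2 - int M)"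
      unfolding emb_def B1_def B2_def by simp
    then have "(k1 - int M, k2 - int M) \<in> Kset" unfolding Kset_def S_def using that by auto
    from M1[OF this] show ?thesis by auto
  qed
  define u where "u i n = g i (B1 + of_nat (fst n), B2 + of_nat (snd n))" for i n
  have u0: "u i0 (M, M) \<noteq> 0" using g0 by (simp add: u_def B1_def B2_def)
  have u_fin: "finite {n. u i n \<noteq> 0}" if "i < r" for i
  proof -
    have "finite ((\<lambda>n::nat\<times>nat. (B1 + of_nat (fst n), B2 + of_nat (snd n))) -` {f. g i f \<noteq> 0})"
      by (rule finite_vimageI[OF g_fin[OF that]]) (auto intro!: injI simp: prod_eq_iff)
    then show ?thesis unfolding u_def by (simp add: vimage_def)
  qed
  have u_eq: "(\<Sum>i<r. \<Sum>j1\<le>n1. \<Sum>j2\<le>n2. scale (cZ (h i) (j1, j2)) (u i (n1 - j1, n2 - j2))) = 0" for n1 n2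
  proof -
    have "(\<Sum>i<r. Sum_any (\<lambda>ij. scale (cZ (h i) ij)
       (g i (B1 + of_nat n1 - of_nat (fst ij), B2 + of_nat n2 - of_nat (snd ij))))) = 0"
      using g_eq[of "(B1 + of_nat n1, B2 + of_nat n2)"] by simp
    moreover have "Sum_any (\<lambda>ij. scale (cZ (h i) ij)
       (g i (B1 + of_nat n1 - of_nat (fst ij), B2 + of_nat n2 - of_nat (snd ij))))
       = (\<Sum>j1\<le>n1. \<Sum>j2\<le>n2. scale (cZ (h i) (j1, j2)) (u i (n1 - j1, n2 - j2)))" if "i < r" for i
    proof -
      have "Sum_any (\<lambda>ij. scale (cZ (h i) ij)
         (g i (B1 + of_nat n1 - of_nat (fst ij), B2 + of_nat n2 - of_nat (snd ij))))
         = (\<Sum>ij\<in>{..n1}\<times>{..n2}. scale (cZ (h i) ij)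
         (g i (B1 + of_nat n1 - of_nat (fst ij), B2 + of_nat n2 - of_nat (snd ij))))"
      proof (rule Sum_any.expand_superset)
        show "finite ({..n1} \<times> {..n2})" by simp
        show "{ij. scale (cZ (h i) ij) (g i (B1 + of_nat n1 - of_nat (fst ij), B2 + of_nat n2 - of_nat (snd ij))) \<noteq> 0}
              \<subseteq> {..n1} \<times> {..n2}"
        proof
          fix ij assume "ij \<in> {ij. scale (cZ (h i) ij) (g i (B1 + of_nat n1 - of_nat (fst ij), B2 + of_nat n2 - of_nat (snd ij))) \<noteq> 0}"
          then have "g i (B1 + of_int (int n1 - int (fst ij)), B2 + of_int (int n2 - int (snd ij))) \<noteq> 0"
            by (simp add: algebra_simps)
          from below[OF that this] show "ij \<in> {..n1} \<times> {..n2}" by (cases ij) auto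
        qed
      qed
      also have "\<dots> = (\<Sum>j1\<le>n1. \<Sum>j2\<le>n2. scale (cZ (h i) (j1, j2))
         (g i (B1 + of_nat n1 - of_nat j1, B2 + of_nat n2 - of_nat j2)))"
        by (simp add: sum.cartesian_product split_def)
      also have "\<dots> = (\<Sum>j1\<le>n1. \<Sum>j2\<le>n2. scale (cZ (h i) (j1, j2)) (u i (n1 - j1, n2 - j2)))"
        by (intro sum.cong refl) (simp add: u_def of_nat_diff algebra_simps)
      finally show ?thesis .
    qed
    ultimately show ?thesis by simp
  qed
  define P where "P k = (\<exists>i<r. \<exists>n1. u i (n1, k) \<noteq> 0)" for k
  have "P M" unfolding P_def using i0 u0 by blast
  define k0 where "k0 = (LEAST k. P k)"
  have Pk0: "P k0" unfolding k0_def using \<open>P M\<close> by (rule LeastI)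
  have below_k0: "u i (n1, k) = 0" if "i < r" "k < k0" for i n1 k
    using not_less_Least[of k P] that unfolding k0_def P_def by blast
  have one_d: "(\<Sum>i<r. \<Sum>j1\<le>n1. scale ((-1) ^ j1 * ((- fst (h i)) gchoose j1)) (u i (n1 - j1, k0))) = 0" for n1
  proof -
    have "(\<Sum>j2\<le>k0. scale (cZ (h i) (j1, j2)) (u i (n1 - j1, k0 - j2)))
         = scale ((-1) ^ j1 * ((- fst (h i)) gchoose j1)) (u i (n1 - j1, k0))" if "i < r" for i j1
    proof -
      have "(\<Sum>j2\<le>k0. scale (cZ (h i) (j1, j2)) (u i (n1 - j1, k0 - j2)))
          = scale (cZ (h i) (j1, 0)) (u i (n1 - j1, k0 - 0))"
        by (rule sum.remove[where x=0, THEN trans]) (auto intro!: sum.neutral below_k0[OF that])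
      then show ?thesis by (simp add: cZ_def)
    qed
    then show ?thesis using u_eq[of n1 k0] by simp
  qed
  obtain i1 n1 where i1: "i1 < r" and v1: "u i1 (n1, k0) \<noteq> 0" using Pk0 unfolding P_def by blast
  obtain \<phi> where lin: "Vector_Spaces.linear scale (*) \<phi>" and \<phi>v: "\<phi> (u i1 (n1, k0)) \<noteq> 0"
    using exists_functional[OF v1] by blast
  define NS where "NS = (\<Union>i<r. fst ` {n. u i n \<noteq> 0})"
  have finNS: "finite NS" unfolding NS_def using u_fin by auto
  define L where "L = Suc (Max (insert 0 NS))"
  have bigL: "u i (k, k0) = 0" if "i < r" "L \<le> k" for i k
  proof (rule ccontr)
    assume "u i (k, k0) \<noteq> 0"
    then have "k \<in> NS" unfolding NS_def using that(1) by force
    then have "k \<le> Max (insert 0 NS)" using finNS by simp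
    then show False using that(2) unfolding L_def by simp
  qed
  define Q where "Q i = Poly (map (\<lambda>k. (-1) ^ k * \<phi> (u i (k, k0))) [0..<L])" for i
  have coeffQ: "coeff (Q i) k = (-1) ^ k * \<phi> (u i (k, k0))" if "i < r" for i k
  proof (cases "k < L")
    case True then show ?thesis by (simp add: Q_def coeff_Poly_eq nth_default_def)
  next
    case False then show ?thesis using bigL[OF that, of k] lin_zero[OF lin]
      by (simp add: Q_def coeff_Poly_eq nth_default_def)
  qed
  have fpseq: "(\<Sum>i<r. fps_binomial (- fst (h i)) * fps_of_poly (Q i)) = 0"
  proof (rule fps_ext)
    fix n
    have "(\<Sum>i<r. fps_binomial (- fst (h i)) * fps_of_poly (Q i)) $ n
        = (\<Sum>i<r. \<Sum>j=0..n. ((- fst (h i)) gchoose j) * ((-1) ^ (n - j) * \<phi> (u i (n - j, k0))))"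
      by (simp add: fps_sum_nth fps_mult_nth coeffQ)
    also have "\<dots> = (-1) ^ n * (\<Sum>i<r. \<Sum>j\<le>n. ((-1) ^ j * ((- fst (h i)) gchoose j)) * \<phi> (u i (n - j, k0)))"
    proof -
      have sg: "(-1::'k) ^ (n - j) = (-1) ^ n * (-1) ^ j" if "j \<le> n" for j
      proof -
        have "(-1::'k) ^ n = (-1) ^ (n - j) * (-1) ^ j" using that by (simp add: power_add[symmetric])
        then have "(-1::'k) ^ n * (-1) ^ j = (-1) ^ (n - j) * ((-1) ^ j * (-1) ^ j)" by simp
        also have "(-1::'k) ^ j * (-1) ^ j = 1" by (simp add: power_add[symmetric] power_even_eq[symmetric]
             flip: mult_2)
        finally show ?thesis by simp
      qed
      show ?thesis
        unfolding sum_distrib_left atLeast0AtMost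
        by (intro sum.cong refl) (simp add: sg)
    qed
    also have "(\<Sum>i<r. \<Sum>j\<le>n. ((-1) ^ j * ((- fst (h i)) gchoose j)) * \<phi> (u i (n - j, k0)))
        = \<phi> (\<Sum>i<r. \<Sum>j1\<le>n. scale ((-1) ^ j1 * ((- fst (h i)) gchoose j1)) (u i (n - j1, k0)))"
      by (simp add: lin_sum[OF lin] lin_scale[OF lin])
    also have "\<dots> = 0" using one_d[of n] lin_zero[OF lin] by simp
    finally show "(\<Sum>i<r. fps_binomial (- fst (h i)) * fps_of_poly (Q i)) $ n = 0 $ n" by simp
  qed
  have "\<forall>i<r. \<forall>j<r. i \<noteq> j \<longrightarrow> (- fst (h i)) - (- fst (h j)) \<notin> \<int>"
    using dist by (auto dest: minus_notin_Ints)
  from core1[OF this fpseq] i1 have "Q i1 = 0" by blast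
  then have "coeff (Q i1) n1 = 0" by simp
  then show False using coeffQ[OF i1, of n1] \<phi>v by simp
qed

end


definition Zsq :: "'k::field_char_0 \<times> 'k \<Rightarrow> bool" where
  "Zsq q \<longleftrightarrow> fst q \<in> \<int> \<and> snd q \<in> \<int>"

lemma in_trans00: "in_trans (0,0) q \<longleftrightarrow> (\<exists>i j::nat. q = (of_nat i, of_nat j))"
  by (simp add: in_trans_def)

lemma in_trans00_Zsq: "in_trans (0,0) q \<Longrightarrow> Zsq q"
  by (auto simp: in_trans_def Zsq_def)

lemma Zsq_shift_minus: "Zsq (fst q - of_nat i, snd q - of_nat j) \<longleftrightarrow> Zsq q"
proof -
  have "a - of_nat i \<in> \<int> \<longleftrightarrow> a \<in> (\<int>::'a::field_char_0 set)" for a :: 'a and i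
  proof
    assume "a - of_nat i \<in> \<int>" then have "a - of_nat i + of_nat i \<in> \<int>" by (intro Ints_add) auto
    then show "a \<in> \<int>" by simp
  qed auto
  then show ?thesis by (simp add: Zsq_def)
qed

lemma Zsq_shift_plus: "Zsq (fst q + of_nat i, snd q + of_nat j) \<longleftrightarrow> Zsq q"
proof -
  have "a + of_nat i \<in> \<int> \<longleftrightarrow> a \<in> (\<int>::'a::field_char_0 set)" for a :: 'a and i
  proof
    assume "a + of_nat i \<in> \<int>" then have "a + of_nat i - of_nat i \<in> \<int>" by (intro Ints_diff) auto
    then show "a \<in> \<int>" by simp
  qed auto
  then show ?thesis by (simp add: Zsq_def)
qed

lemma fin_below:
  fixes F :: "'k::field_char_0 \<times> 'k \<Rightarrow> 'k \<times> 'k \<Rightarrow> 'v::zero"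
  assumes "vseries2 F"
  shows "finite {ab::nat\<times>nat. \<exists>p. F p (x1 - of_nat (fst ab), x2 - of_nat (snd ab)) \<noteq> 0}"
proof -
  obtain H where H: "finite H" "\<forall>p q. F p q \<noteq> 0 \<longrightarrow> (\<exists>hk\<in>H. in_trans (fst hk) p \<and> in_trans (snd hk) q)"
    using assms unfolding vseries2_def by blast
  define T where "T k = {ab::nat\<times>nat. in_trans k (x1 - of_nat (fst ab), x2 - of_nat (snd ab))}" for k
  have finT: "finite (T k)" for k
  proof (cases "T k = {}")
    case True then show ?thesis by simp
  next
    case False
    then obtain ab0 where "ab0 \<in> T k" by blast
    then obtain c1 c2 :: nat where c: "(x1 - of_nat (fst ab0), x2 - of_nat (snd ab0)) = (fst k + of_nat c1, snd k + of_nat c2)"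
      unfolding T_def in_trans_def by blast
    have "T k \<subseteq> {..fst ab0 + c1} \<times> {..snd ab0 + c2}"
    proof
      fix ab assume "ab \<in> T k"
      then obtain d1 d2 :: nat where d: "(x1 - of_nat (fst ab), x2 - of_nat (snd ab)) = (fst k + of_nat d1, snd k + of_nat d2)"
        unfolding T_def in_trans_def by blast
      have "(of_nat (fst ab + d1) :: 'k) = of_nat (fst ab0 + c1)" using c d by (auto simp: algebra_simps)
      then have e1: "fst ab + d1 = fst ab0 + c1" using of_nat_eq_iff by blast
      have "(of_nat (snd ab + d2) :: 'k) = of_nat (snd ab0 + c2)" using c d by (auto simp: algebra_simps)
      then have e2: "snd ab + d2 = snd ab0 + c2" using of_nat_eq_iff by blast
      show "ab \<in> {..fst ab0 + c1} \<times> {..snd ab0 + c2}" using e1 e2 by (cases ab) auto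
    qed
    then show ?thesis by (rule finite_subset) simp
  qed
  have "{ab::nat\<times>nat. \<exists>p. F p (x1 - of_nat (fst ab), x2 - of_nat (snd ab)) \<noteq> 0} \<subseteq> (\<Union>hk\<in>H. T (snd hk))"
    using H(2) unfolding T_def by fastforce
  then show ?thesis using finT H(1) by (meson finite_UN_I finite_subset)
qed

definition swap2 :: "('a \<Rightarrow> 'a \<Rightarrow> 'b) \<Rightarrow> 'a \<Rightarrow> 'a \<Rightarrow> 'b" where
  "swap2 F x y = F y x"

lemma vseries2_swap: "vseries2 F \<Longrightarrow> vseries2 (swap2 F)"
proof -
  assume "vseries2 F"
  then obtain H where H: "finite H" "\<forall>p q. F p q \<noteq> 0 \<longrightarrow> (\<exists>hk\<in>H. in_trans (fst hk) p \<and> in_trans (snd hk) q)"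
    unfolding vseries2_def by blast
  show ?thesis unfolding vseries2_def swap2_def
    using H by (intro exI[of _ "(\<lambda>hk. (snd hk, fst hk)) ` H"]) fastforce
qed

lemma mulWZ_swap:
  "mulWZ scale h F p q = scale (chk_sign h) (mulZW scale h (swap2 F) q p)"
  by (simp add: mulWZ_def mulZW_def swap2_def)

context vsk
begin

lemma Sum_any_scale: "Sum_any (\<lambda>x. scale c (f x)) = scale c (Sum_any f)"
proof (cases "c = 0")
  case True then show ?thesis by simp
next
  case False
  then have eqs: "{x. scale c (f x) \<noteq> 0} = {x. f x \<noteq> 0}" by simp
  show ?thesis
  proof (cases "finite {x. f x \<noteq> 0}")
    case True
    then show ?thesis unfolding Sum_any.expand_set eqs by (simp add: scale_sum_right)
  next
    case False
    then show ?thesis using eqs by simp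
  qed
qed

lemma mulZW_scale: "mulZW scale h (\<lambda>x y. scale c (F x y)) p q = scale c (mulZW scale h F p q)"
  unfolding mulZW_def by (simp add: Sum_any_scale[symmetric] scale_scale mult.commute)

lemma mulZW_nonzero_obtain:
  assumes "mulZW scale (negp h) F p q \<noteq> 0"
  obtains i j :: nat where "F (fst p + fst h + of_nat i, snd p + snd h + of_nat j) (fst q - of_nat i, snd q - of_nat j) \<noteq> 0"
proof -
  from assms[unfolded mulZW_negp] obtain ij where
    "scale (cZ h ij) (F (fst p + fst h + of_nat (fst ij), snd p + snd h + of_nat (snd ij))
         (fst q - of_nat (fst ij), snd q - of_nat (snd ij))) \<noteq> 0"
    by (rule Sum_any.not_neutral_obtains_not_neutral)
  then show ?thesis using that by (cases ij) auto
qed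

lemma LT:
  fixes F :: "'k \<times> 'k \<Rightarrow> 'k \<times> 'k \<Rightarrow> 'v"
  assumes vs: "vseries2 F"
    and out: "\<forall>p q. mulZW scale (negp h) F p q \<noteq> 0 \<longrightarrow> in_trans (0,0) q"
  shows "\<forall>p q. F p q \<noteq> 0 \<longrightarrow> in_trans (0,0) q"
proof (rule ccontr)
  assume "\<not> ?thesis"
  then obtain p0 q0 where F0: "F p0 q0 \<noteq> 0" and nq0: "\<not> in_trans (0,0) q0" by blast
  define D where "D = {ab::nat\<times>nat. \<exists>p. F p (fst q0 - of_nat (fst ab), snd q0 - of_nat (snd ab)) \<noteq> 0}"
  have finD: "finite D" unfolding D_def by (rule fin_below[OF vs])
  have "(0,0) \<in> D" unfolding D_def using F0 by (cases p0) auto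
  have bnd: "\<forall>y. y \<in> D \<longrightarrow> fst y + snd y < Suc (Max ((\<lambda>y. fst y + snd y) ` D))"
    using finD by (auto simp: le_imp_less_Suc)
  obtain ab where abD: "ab \<in> D" and abmax: "\<forall>y\<in>D. fst y + snd y \<le> fst ab + snd ab"
    using Lattices_Big.ex_has_greatest_nat[of "\<lambda>y. y \<in> D", OF \<open>(0,0) \<in> D\<close> bnd] by blast
  define q1 where "q1 = (fst q0 - of_nat (fst ab), snd q0 - of_nat (snd ab))"
  obtain p1 where F1: "F p1 q1 \<noteq> 0" using abD unfolding D_def q1_def by blast
  have nq1: "\<not> in_trans (0,0) q1"
  proof
    assume "in_trans (0,0) q1"
    then obtain i j :: nat where "q1 = (of_nat i, of_nat j)" by (auto simp: in_trans_def)
    then have "q0 = (of_nat (i + fst ab), of_nat (j + snd ab))" unfolding q1_def by (auto simp: prod_eq_iff algebra_simps)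
    then have "in_trans (0,0) q0" unfolding in_trans_def
      by (intro exI[of _ "i + fst ab"] exI[of _ "j + snd ab"]) simp
    with nq0 show False by simp
  qed
  have "mulZW scale (negp h) F (fst p1 - fst h, snd p1 - snd h) q1 = F p1 q1"
  proof -
    have "mulZW scale (negp h) F (fst p1 - fst h, snd p1 - snd h) q1 =
      Sum_any (\<lambda>ij. scale (cZ h ij) (F (fst p1 + of_nat (fst ij), snd p1 + of_nat (snd ij))
         (fst q1 - of_nat (fst ij), snd q1 - of_nat (snd ij))))"
      unfolding mulZW_negp by simp
    also have "\<dots> = scale (cZ h (0,0)) (F (fst p1 + of_nat (fst (0::nat,0::nat)), snd p1 + of_nat (snd (0::nat,0::nat)))
         (fst q1 - of_nat (fst (0::nat,0::nat)), snd q1 - of_nat (snd (0::nat,0::nat))))"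
    proof (rule Sum_any.expand_superset[where A="{(0,0)}", THEN trans])
      show "{ij. scale (cZ h ij) (F (fst p1 + of_nat (fst ij), snd p1 + of_nat (snd ij))
           (fst q1 - of_nat (fst ij), snd q1 - of_nat (snd ij))) \<noteq> 0} \<subseteq> {(0,0)}"
      proof
        fix ij assume "ij \<in> {ij. scale (cZ h ij) (F (fst p1 + of_nat (fst ij), snd p1 + of_nat (snd ij))
           (fst q1 - of_nat (fst ij), snd q1 - of_nat (snd ij))) \<noteq> 0}"
        then have "F (fst p1 + of_nat (fst ij), snd p1 + of_nat (snd ij))
           (fst q0 - of_nat (fst ab + fst ij), snd q0 - of_nat (snd ab + snd ij)) \<noteq> 0"
          by (simp add: q1_def algebra_simps)
        then have "(fst ab + fst ij, snd ab + snd ij) \<in> D" unfolding D_def by auto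
        with abmax have "fst ab + fst ij + (snd ab + snd ij) \<le> fst ab + snd ab" by fastforce
        then show "ij \<in> {(0,0)}" by (cases ij) auto
      qed
    qed simp_all
    also have "\<dots> = F p1 q1" by (simp add: cZ_def)
    finally show ?thesis .
  qed
  with F1 out nq1 show False by metis
qed

end


lemma negm1_negm1[simp]: "negm1 (negm1 p) = (p::'k::field \<times> 'k)"
  by (simp add: negm1_def)

lemma vseries2_mono:
  assumes "vseries2 F" "\<forall>p q. G p q \<noteq> 0 \<longrightarrow> F p q \<noteq> 0"
  shows "vseries2 G"
  using assms unfolding vseries2_def by metis

lemma Zsq_diff:
  assumes "Zsq x" "Zsq y"
  shows "\<exists>k l::int. fst x - fst y = of_int k \<and> snd x - snd y = of_int l"
proof -
  have "fst x - fst y \<in> \<int>" "snd x - snd y \<in> \<int>" using assms by (auto simp: Zsq_def)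
  then show ?thesis by (auto elim!: Ints_cases)
qed

lemma chk_sign_nz: "chk_sign h \<noteq> (0::'k::field_char_0)"
  by (simp add: chk_sign_def)

locale thm_ctx = vsk scale for scale :: "'k::field_char_0 \<Rightarrow> 'v::ab_group_add \<Rightarrow> 'v" +
  fixes \<sigma> :: "'v \<Rightarrow> 'v" and one :: 'v and a b :: "('k, 'v) dist1"
    and r :: nat and h :: "nat \<Rightarrow> 'k \<times> 'k" and c :: "nat \<Rightarrow> ('k, 'v) dist2"
  assumes ld: "local_data scale \<sigma> a b r h c"
    and red: "\<forall>i<r. \<forall>j<r. i \<noteq> j \<longrightarrow>
        \<not> (\<exists>k l::int. fst (h i) - fst (h j) = of_int k \<and> snd (h i) - snd (h j) = of_int l)"
    and Ea: "End_dist1 scale a" and Eb: "End_dist1 scale b"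
    and ca: "creative1 one a" and cb: "creative1 one b"
begin

definition C :: "nat \<Rightarrow> 'k \<times> 'k \<Rightarrow> 'k \<times> 'k \<Rightarrow> 'v" where
  "C i = ser2 (c i) one"

lemma fields: "\<forall>i<r. field2 scale (c i) \<and> h i \<in> chkK"
  using ld unfolding local_data_def by blast

lemma vsC: "i < r \<Longrightarrow> vseries2 (C i)"
  using fields unfolding field2_def C_def by blast

lemma L1: "a (negm1 p) (b (negm1 q) one) = (\<Sum>i<r. mulZW scale (negp (h i)) (C i) p q)"
  using ld unfolding local_data_def C_def by blast

lemma L2: "\<exists>s. s \<noteq> 0 \<and> (\<forall>p q. scale s (b (negm1 q) (a (negm1 p) one)) = (\<Sum>i<r. mulWZ scale (negp (h i)) (C i) p q))"
proof -
  obtain pa pb where "\<forall>v p q. scale (if pa \<and> pb then -1 else 1) (b (negm1 q) (a (negm1 p) v))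
                = (\<Sum>i<r. mulWZ scale (negp (h i)) (ser2 (c i) v) p q)"
    using ld unfolding local_data_def by blast
  then show ?thesis unfolding C_def by (intro exI[of _ "if pa \<and> pb then -1 else 1"]) auto
qed

lemma a_lin: "Vector_Spaces.linear scale scale (a n)" using Ea unfolding End_dist1_def by blast
lemma b_lin: "Vector_Spaces.linear scale scale (b n)" using Eb unfolding End_dist1_def by blast

lemma b_cre: "b (negm1 q) one \<noteq> 0 \<Longrightarrow> in_trans (0,0) q"
  using cb unfolding creative1_def by (metis negm1_negm1)
lemma a_cre: "a (negm1 q) one \<noteq> 0 \<Longrightarrow> in_trans (0,0) q"
  using ca unfolding creative1_def by (metis negm1_negm1)

lemma Sfact: "(\<Sum>i<r. mulZW scale (negp (h i)) (C i) p q) \<noteq> 0 \<Longrightarrow> in_trans (0,0) q"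
  using L1[of p q] b_cre lin_zero[OF a_lin] by metis

lemma S'fact: "(\<Sum>i<r. mulWZ scale (negp (h i)) (C i) p q) \<noteq> 0 \<Longrightarrow> in_trans (0,0) p"
proof -
  obtain s where "s \<noteq> 0" "\<forall>p q. scale s (b (negm1 q) (a (negm1 p) one)) = (\<Sum>i<r. mulWZ scale (negp (h i)) (C i) p q)"
    using L2 by blast
  then show "(\<Sum>i<r. mulWZ scale (negp (h i)) (C i) p q) \<noteq> 0 \<Longrightarrow> in_trans (0,0) p"
    using a_cre lin_zero[OF b_lin] by (metis scale_zero_right)
qed

lemma distK: "\<forall>i<r. \<forall>j<r. i \<noteq> j \<longrightarrow> fst (h i) - fst (h j) \<notin> \<int>"
proof (intro allI impI)
  fix i j assume "i < r" "j < r" "i \<noteq> j"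
  then show "fst (h i) - fst (h j) \<notin> \<int>"
    by (intro dist_from_chkK) (use fields red in simp_all)
qed

lemma mulZW_filter:
  "mulZW scale (negp hh) (\<lambda>x y. if Zsq y then 0 else F x y) p q = (if Zsq q then 0 else mulZW scale (negp hh) F p q)"
  unfolding mulZW_negp by (cases "Zsq q") (simp_all add: Zsq_shift_minus)

lemma W1: "\<forall>i<r. \<forall>p q. C i p q \<noteq> 0 \<longrightarrow> Zsq q"
proof -
  define G where "G i x y = (if Zsq y then 0 else C i x y)" for i x y
  have vsG: "\<forall>i<r. vseries2 (G i)"
  proof (intro allI impI)
    fix i assume "i < r"
    show "vseries2 (G i)" by (rule vseries2_mono[OF vsC[OF \<open>i < r\<close>]]) (simp add: G_def)
  qed
  have eqG: "\<forall>p q. (\<Sum>i<r. mulZW scale (negp (h i)) (G i) p q) = 0"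
  proof (intro allI)
    fix p q
    have "(\<Sum>i<r. mulZW scale (negp (h i)) (G i) p q) = (if Zsq q then 0 else (\<Sum>i<r. mulZW scale (negp (h i)) (C i) p q))"
      unfolding G_def mulZW_filter by simp
    moreover have "Zsq q" if "(\<Sum>i<r. mulZW scale (negp (h i)) (C i) p q) \<noteq> 0"
      using Sfact[OF that] by (rule in_trans00_Zsq)
    ultimately show "(\<Sum>i<r. mulZW scale (negp (h i)) (G i) p q) = 0" by auto
  qed
  have z: "\<forall>i<r. \<forall>p q. G i p q = 0" by (rule HL[OF vsG distK eqG])
  show ?thesis
  proof (intro allI impI)
    fix i p q assume "i < r" "C i p q \<noteq> 0"
    with z have "G i p q = 0" by blast
    with \<open>C i p q \<noteq> 0\<close> show "Zsq q" unfolding G_def by (auto split: if_splits)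
  qed
qed

lemma Z1: "\<forall>i<r. \<forall>p q. C i p q \<noteq> 0 \<longrightarrow> Zsq p"
proof -
  define G where "G i x y = (if Zsq x then 0 else C i x y)" for i x y
  define G' where "G' i x y = scale (chk_sign (negp (h i))) (swap2 (G i) x y)" for i x y
  have vsG: "\<forall>i<r. vseries2 (G' i)"
  proof (intro allI impI)
    fix i assume "i < r"
    have "vseries2 (swap2 (C i))" using vsC[OF \<open>i < r\<close>] by (rule vseries2_swap)
    then show "vseries2 (G' i)" by (rule vseries2_mono) (auto simp: G'_def G_def swap2_def)
  qed
  have eqG: "\<forall>q p. (\<Sum>i<r. mulZW scale (negp (h i)) (G' i) q p) = 0"
  proof (intro allI)
    fix p q
    have "mulZW scale (negp (h i)) (G' i) q p = (if Zsq p then 0 else mulWZ scale (negp (h i)) (C i) p q)" for i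
    proof -
      have "mulZW scale (negp (h i)) (G' i) q p = scale (chk_sign (negp (h i))) (mulZW scale (negp (h i)) (swap2 (G i)) q p)"
        unfolding G'_def by (rule mulZW_scale)
      also have "swap2 (G i) = (\<lambda>x y. if Zsq y then 0 else swap2 (C i) x y)"
        by (simp add: fun_eq_iff swap2_def G_def)
      finally show ?thesis by (simp add: mulZW_filter mulWZ_swap)
    qed
    then have "(\<Sum>i<r. mulZW scale (negp (h i)) (G' i) q p) = (if Zsq p then 0 else (\<Sum>i<r. mulWZ scale (negp (h i)) (C i) p q))"
      by simp
    moreover have "Zsq p" if "(\<Sum>i<r. mulWZ scale (negp (h i)) (C i) p q) \<noteq> 0"
      using S'fact[OF that] by (rule in_trans00_Zsq)
    ultimately show "(\<Sum>i<r. mulZW scale (negp (h i)) (G' i) q p) = 0" by auto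
  qed
  have z: "\<forall>i<r. \<forall>p q. G' i p q = 0" by (rule HL[OF vsG distK eqG])
  show ?thesis
  proof (intro allI impI)
    fix i p q assume "i < r" "C i p q \<noteq> 0"
    with z have "G' i q p = 0" by blast
    then have "G i p q = 0" unfolding G'_def swap2_def using chk_sign_nz[of "negp (h i)"] by simp
    with \<open>C i p q \<noteq> 0\<close> show "Zsq p" unfolding G_def by (auto split: if_splits)
  qed
qed

lemma sum_single_nz:
  assumes "i < r" "\<forall>j<r. j \<noteq> i \<longrightarrow> f j = (0::'v)"
  shows "(\<Sum>j<r. f j) = f i"
  using assms by (subst sum.remove[of _ i]) (auto intro!: sum.neutral)

lemma W2: "\<forall>i<r. \<forall>p q. mulZW scale (negp (h i)) (C i) p q \<noteq> 0 \<longrightarrow> in_trans (0,0) q"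
proof (intro allI impI)
  fix i p q assume i: "i < r" and nz: "mulZW scale (negp (h i)) (C i) p q \<noteq> 0"
  have cls: "Zsq (fst p + fst (h j), snd p + snd (h j))" if jr: "j < r" and nzj: "mulZW scale (negp (h j)) (C j) p q \<noteq> 0" for j
  proof -
    obtain k l :: nat where "C j (fst p + fst (h j) + of_nat k, snd p + snd (h j) + of_nat l) (fst q - of_nat k, snd q - of_nat l) \<noteq> 0"
      using nzj by (rule mulZW_nonzero_obtain)
    then have "Zsq (fst p + fst (h j) + of_nat k, snd p + snd (h j) + of_nat l)" using Z1 jr by blast
    then show ?thesis using Zsq_shift_plus[of "(fst p + fst (h j), snd p + snd (h j))"] by simp
  qed
  have "\<forall>j<r. j \<noteq> i \<longrightarrow> mulZW scale (negp (h j)) (C j) p q = 0"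
  proof (intro allI impI, rule ccontr)
    fix j assume j: "j < r" "j \<noteq> i" and nzj: "mulZW scale (negp (h j)) (C j) p q \<noteq> 0"
    from Zsq_diff[OF cls[OF i nz] cls[OF j(1) nzj]] have "\<exists>k l::int. fst (h i) - fst (h j) = of_int k \<and> snd (h i) - snd (h j) = of_int l"
      by simp
    with red i j show False by blast
  qed
  then have "(\<Sum>j<r. mulZW scale (negp (h j)) (C j) p q) = mulZW scale (negp (h i)) (C i) p q"
    by (rule sum_single_nz[OF i])
  then show "in_trans (0,0) q" using Sfact[of p q] nz by metis
qed

lemma Z2: "\<forall>i<r. \<forall>p q. mulWZ scale (negp (h i)) (C i) p q \<noteq> 0 \<longrightarrow> in_trans (0,0) p"
proof (intro allI impI)
  fix i p q assume i: "i < r" and nz: "mulWZ scale (negp (h i)) (C i) p q \<noteq> 0"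
  have cls: "Zsq (fst q + fst (h j), snd q + snd (h j))" if jr: "j < r" and nzj: "mulWZ scale (negp (h j)) (C j) p q \<noteq> 0" for j
  proof -
    have "mulZW scale (negp (h j)) (swap2 (C j)) q p \<noteq> 0" using nzj by (simp add: mulWZ_swap)
    then obtain k l :: nat where "swap2 (C j) (fst q + fst (h j) + of_nat k, snd q + snd (h j) + of_nat l) (fst p - of_nat k, snd p - of_nat l) \<noteq> 0"
      by (rule mulZW_nonzero_obtain)
    then have "Zsq (fst q + fst (h j) + of_nat k, snd q + snd (h j) + of_nat l)" using W1 jr unfolding swap2_def by blast
    then show ?thesis using Zsq_shift_plus[of "(fst q + fst (h j), snd q + snd (h j))"] by simp
  qed
  have "\<forall>j<r. j \<noteq> i \<longrightarrow> mulWZ scale (negp (h j)) (C j) p q = 0"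
  proof (intro allI impI, rule ccontr)
    fix j assume j: "j < r" "j \<noteq> i" and nzj: "mulWZ scale (negp (h j)) (C j) p q \<noteq> 0"
    from Zsq_diff[OF cls[OF i nz] cls[OF j(1) nzj]] have "\<exists>k l::int. fst (h i) - fst (h j) = of_int k \<and> snd (h i) - snd (h j) = of_int l"
      by simp
    with red i j show False by blast
  qed
  then have "(\<Sum>j<r. mulWZ scale (negp (h j)) (C j) p q) = mulWZ scale (negp (h i)) (C i) p q"
    by (rule sum_single_nz[OF i])
  then show "in_trans (0,0) p" using S'fact[of p q] nz by metis
qed

lemma Ccre: "\<forall>i<r. \<forall>p q. C i p q \<noteq> 0 \<longrightarrow> in_trans (0,0) p \<and> in_trans (0,0) q"
proof (intro allI impI)
  fix i p q assume i: "i < r" and nz: "C i p q \<noteq> 0"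
  have q: "in_trans (0,0) q" using LT[OF vsC[OF i]] W2 i nz by blast
  have "\<forall>x y. swap2 (C i) x y \<noteq> 0 \<longrightarrow> in_trans (0,0) y"
  proof (rule LT[OF vseries2_swap[OF vsC[OF i]]], intro allI impI)
    fix x y assume "mulZW scale (negp (h i)) (swap2 (C i)) x y \<noteq> 0"
    then have "mulWZ scale (negp (h i)) (C i) y x \<noteq> 0" by (simp add: mulWZ_swap chk_sign_nz)
    then show "in_trans (0,0) y" using Z2 i by blast
  qed
  moreover have "swap2 (C i) q p \<noteq> 0" using nz by (simp add: swap2_def)
  ultimately have "in_trans (0,0) p" by blast
  with q show "in_trans (0,0) p \<and> in_trans (0,0) q" by simp
qed

lemma creative_c: "\<forall>i<r. creative2 one (c i)"
  unfolding creative2_def using Ccre unfolding C_def ser2_def by (metis negm1_negm1)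

end


lemma gch_nat_nz: "(of_nat x :: 'k::field_char_0) gchoose k \<noteq> 0 \<Longrightarrow> k \<le> x"
  by (metis binomial_gbinomial binomial_eq_0 not_le of_nat_0)

lemma gch_nat_self: "(of_nat k :: 'k::field_char_0) gchoose k = 1"
  by (metis binomial_gbinomial binomial_n_n of_nat_1)

lemma Sum_any_natpair:
  fixes X :: "nat \<times> nat \<Rightarrow> 'a::comm_monoid_add" and x1 x2 :: "'k::field_char_0"
  assumes "\<And>k. x1 = of_nat (fst k) \<Longrightarrow> x2 = of_nat (snd k) \<Longrightarrow> X k = Y"
    and "\<not> (\<exists>k. x1 = of_nat (fst k) \<and> x2 = (of_nat (snd k) :: 'k::field_char_0)) \<Longrightarrow> Y = 0"
  shows "Sum_any (\<lambda>k. if x1 = of_nat (fst k) \<and> x2 = of_nat (snd k) then X k else 0) = Y"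
proof (cases "\<exists>k. x1 = of_nat (fst k) \<and> x2 = (of_nat (snd k) :: 'k)")
  case True
  then obtain k0 where k0: "x1 = of_nat (fst k0)" "x2 = of_nat (snd k0)" by blast
  have "(x1 = of_nat (fst k) \<and> x2 = of_nat (snd k)) \<longleftrightarrow> k = k0" for k
    using k0 by (auto simp: prod_eq_iff)
  then have "Sum_any (\<lambda>k. if x1 = of_nat (fst k) \<and> x2 = of_nat (snd k) then X k else 0)
      = Sum_any (\<lambda>k. if k = k0 then X k else 0)" by simp
  also have "\<dots> = X k0" by simp
  finally show ?thesis using assms(1)[OF k0] by simp
next
  case False
  have z: "(if x1 = of_nat (fst k) \<and> x2 = of_nat (snd k) then X k else 0) = 0" for k
    using False by auto
  show ?thesis unfolding z using assms(2) False by simp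
qed

lemma diag_nonzero:
  fixes F :: "'k::field_char_0 \<times> 'k \<Rightarrow> 'k \<times> 'k \<Rightarrow> 'v::ab_group_add"
  assumes vs: "vector_space scale"
    and cre: "\<forall>p q. F p q \<noteq> 0 \<longrightarrow> in_trans (0,0) p \<and> in_trans (0,0) q"
    and nz: "diag_der scale ka kb F e \<noteq> 0"
  shows "in_trans (0,0) e"
proof -
  interpret vector_space scale by fact
  obtain p where "scale (((fst p + of_nat ka) gchoose ka) * ((snd p + of_nat kb) gchoose kb))
      (F (fst p + of_nat ka, snd p + of_nat kb) (fst e - fst p, snd e - snd p)) \<noteq> 0"
    using nz unfolding diag_der_def by (rule Sum_any.not_neutral_obtains_not_neutral)
  then have b: "(fst p + of_nat ka) gchoose ka \<noteq> 0" "(snd p + of_nat kb) gchoose kb \<noteq> 0"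
    and Fnz: "F (fst p + of_nat ka, snd p + of_nat kb) (fst e - fst p, snd e - snd p) \<noteq> 0" by auto
  have "in_trans (0,0) (fst p + of_nat ka, snd p + of_nat kb) \<and> in_trans (0,0) (fst e - fst p, snd e - snd p)"
    using cre Fnz by blast
  then obtain x1 x2 y1 y2 :: nat where
    x: "fst p + of_nat ka = of_nat x1" "snd p + of_nat kb = of_nat x2" and
    y: "fst e - fst p = of_nat y1" "snd e - snd p = of_nat y2"
    unfolding in_trans_def by auto
  have "ka \<le> x1" using b(1) x(1) gch_nat_nz by metis
  have "kb \<le> x2" using b(2) x(2) gch_nat_nz by metis
  have "fst e = of_nat (x1 - ka + y1)" using x y \<open>ka \<le> x1\<close> by (simp add: of_nat_diff algebra_simps)
  moreover have "snd e = of_nat (x2 - kb + y2)" using x y \<open>kb \<le> x2\<close> by (simp add: of_nat_diff algebra_simps)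
  ultimately show ?thesis unfolding in_trans_def by (intro exI[of _ "x1 - ka + y1"] exI[of _ "x2 - kb + y2"]) (simp add: prod_eq_iff)
qed

lemma diag_at0:
  fixes F :: "'k::field_char_0 \<times> 'k \<Rightarrow> 'k \<times> 'k \<Rightarrow> 'v::ab_group_add"
  assumes vs: "vector_space scale"
    and cre: "\<forall>p q. F p q \<noteq> 0 \<longrightarrow> in_trans (0,0) p \<and> in_trans (0,0) q"
  shows "diag_der scale ka kb F (0,0) = F (of_nat ka, of_nat kb) (0,0)"
proof -
  interpret vector_space scale by fact
  have "diag_der scale ka kb F (0,0) = (\<Sum>p\<in>{(0,0)}. scale (((fst p + of_nat ka) gchoose ka) * ((snd p + of_nat kb) gchoose kb))
      (F (fst p + of_nat ka, snd p + of_nat kb) (fst (0::'k,0::'k) - fst p, snd (0::'k,0::'k) - snd p)))"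
    unfolding diag_der_def
  proof (rule Sum_any.expand_superset)
    show "{p. scale (((fst p + of_nat ka) gchoose ka) * ((snd p + of_nat kb) gchoose kb))
      (F (fst p + of_nat ka, snd p + of_nat kb) (fst (0::'k,0::'k) - fst p, snd (0::'k,0::'k) - snd p)) \<noteq> 0} \<subseteq> {(0,0)}"
    proof
      fix p assume "p \<in> {p. scale (((fst p + of_nat ka) gchoose ka) * ((snd p + of_nat kb) gchoose kb))
        (F (fst p + of_nat ka, snd p + of_nat kb) (fst (0::'k,0::'k) - fst p, snd (0::'k,0::'k) - snd p)) \<noteq> 0}"
      then have b: "(fst p + of_nat ka) gchoose ka \<noteq> 0" "(snd p + of_nat kb) gchoose kb \<noteq> 0"
        and Fnz: "F (fst p + of_nat ka, snd p + of_nat kb) (- fst p, - snd p) \<noteq> 0" by auto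
      have "in_trans (0,0) (fst p + of_nat ka, snd p + of_nat kb) \<and> in_trans (0,0) (- fst p, - snd p)"
        using cre Fnz by blast
      then obtain x1 x2 y1 y2 :: nat where
        x: "fst p + of_nat ka = of_nat x1" "snd p + of_nat kb = of_nat x2" and
        y: "- fst p = of_nat y1" "- snd p = of_nat y2"
        unfolding in_trans_def by auto
      have "ka \<le> x1" using b(1) x(1) gch_nat_nz by metis
      have "kb \<le> x2" using b(2) x(2) gch_nat_nz by metis
      have "fst p = of_nat x1 - of_nat ka" using x(1) by (simp add: algebra_simps)
      then have "of_nat y1 = of_nat ka - (of_nat x1 :: 'k)" using y(1) by simp
      then have "(of_nat (x1 + y1) :: 'k) = of_nat ka" by (simp add: algebra_simps)
      then have "x1 + y1 = ka" using of_nat_eq_iff by blast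
      then have "y1 = 0" using \<open>ka \<le> x1\<close> by simp
      have "snd p = of_nat x2 - of_nat kb" using x(2) by (simp add: algebra_simps)
      then have "of_nat y2 = of_nat kb - (of_nat x2 :: 'k)" using y(2) by simp
      then have "(of_nat (x2 + y2) :: 'k) = of_nat kb" by (simp add: algebra_simps)
      then have "x2 + y2 = kb" using of_nat_eq_iff by blast
      then have "y2 = 0" using \<open>kb \<le> x2\<close> by simp
      show "p \<in> {(0,0)}" using y \<open>y1 = 0\<close> \<open>y2 = 0\<close> by (cases p) simp
    qed
  qed simp
  also have "\<dots> = F (of_nat ka, of_nat kb) (0,0)" by (simp add: gch_nat_self)
  finally show ?thesis .
qed

context thm_ctx
begin

definition f :: "nat \<Rightarrow> 'k \<times> 'k \<Rightarrow> 'v" where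
  "f i p = C i (fst p + fst (h i), snd p + snd (h i)) (0,0)"

lemma mulZW_q0:
  assumes "i < r"
  shows "mulZW scale (negp (h i)) (C i) p (0,0) = f i p"
proof -
  have "mulZW scale (negp (h i)) (C i) p (0,0) = (\<Sum>ij\<in>{(0,0)}. scale (cZ (h i) ij)
      (C i (fst p + fst (h i) + of_nat (fst ij), snd p + snd (h i) + of_nat (snd ij))
         (fst (0::'k,0::'k) - of_nat (fst ij), snd (0::'k,0::'k) - of_nat (snd ij))))"
    unfolding mulZW_negp
  proof (rule Sum_any.expand_superset)
    show "{ij. scale (cZ (h i) ij)
      (C i (fst p + fst (h i) + of_nat (fst ij), snd p + snd (h i) + of_nat (snd ij))
         (fst (0::'k,0::'k) - of_nat (fst ij), snd (0::'k,0::'k) - of_nat (snd ij))) \<noteq> 0} \<subseteq> {(0,0)}"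
    proof
      fix ij assume "ij \<in> {ij. scale (cZ (h i) ij)
        (C i (fst p + fst (h i) + of_nat (fst ij), snd p + snd (h i) + of_nat (snd ij))
         (fst (0::'k,0::'k) - of_nat (fst ij), snd (0::'k,0::'k) - of_nat (snd ij))) \<noteq> 0}"
      then have "C i (fst p + fst (h i) + of_nat (fst ij), snd p + snd (h i) + of_nat (snd ij))
         (- of_nat (fst ij), - of_nat (snd ij)) \<noteq> 0" by auto
      then have "in_trans (0,0) (- of_nat (fst ij) :: 'k, - of_nat (snd ij) :: 'k)" using Ccre assms by blast
      then obtain y1 y2 :: nat where "- (of_nat (fst ij) :: 'k) = of_nat y1" "- (of_nat (snd ij) :: 'k) = of_nat y2"
        unfolding in_trans_def by auto
      then have "of_nat y1 = - (of_nat (fst ij) :: 'k)" "of_nat y2 = - (of_nat (snd ij) :: 'k)" by simp_all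
      then have "(of_nat (fst ij + y1) :: 'k) = 0" "(of_nat (snd ij + y2) :: 'k) = 0" by simp_all
      then show "ij \<in> {(0,0)}" by (cases ij) (simp del: of_nat_add)
    qed
  qed simp
  also have "\<dots> = f i p" by (simp add: f_def cZ_def)
  finally show ?thesis .
qed

lemma f_supp: "i < r \<Longrightarrow> f i p \<noteq> 0 \<Longrightarrow> in_trans (negp (h i)) p"
proof -
  assume i: "i < r" and "f i p \<noteq> 0"
  then have "in_trans (0,0) (fst p + fst (h i), snd p + snd (h i))" using Ccre unfolding f_def by blast
  then obtain x y :: nat where "fst p + fst (h i) = of_nat x" "snd p + snd (h i) = of_nat y"
    unfolding in_trans_def by auto
  then show "in_trans (negp (h i)) p" unfolding in_trans_def negp_def
    by (intro exI[of _ x] exI[of _ y]) (simp add: prod_eq_iff algebra_simps)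
qed

lemma a_on_s: "a (negm1 p) (s1 one b) = (\<Sum>i<r. f i p)"
proof -
  have "s1 one b = b (negm1 (0,0)) one" by (simp add: s1_def negm1_def)
  then show ?thesis using L1[of p "(0,0)"] mulZW_q0 by simp
qed

lemma partii: "\<exists>f :: nat \<Rightarrow> 'k \<times> 'k \<Rightarrow> 'v. (\<forall>i<r. \<forall>p. f i p \<noteq> 0 \<longrightarrow> in_trans (negp (h i)) p)
                 \<and> ser1 a (s1 one b) = (\<lambda>p. \<Sum>i<r. f i p)"
  using f_supp a_on_s by (intro exI[of _ f]) (auto simp: ser1_def fun_eq_iff)

lemma Cre_i: "i < r \<Longrightarrow> \<forall>p q. C i p q \<noteq> 0 \<longrightarrow> in_trans (0,0) p \<and> in_trans (0,0) q"
  using Ccre by blast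

lemma nth_prod_C: "nth_prod scale r h c n m one = (\<Sum>i<r. \<Sum>k.
      (if fst (h i) - 1 - fst n = of_nat (fst k) \<and> snd (h i) - 1 - snd n = of_nat (snd k)
       then diag_der scale (fst k) (snd k) (C i) (negm1 m) else 0))"
  unfolding C_def nth_prod_def by (rule refl)

lemma partiii: "s1 one (nth_prod scale r h c n) = a n (s1 one b)"
proof -
  have "s1 one (nth_prod scale r h c n) = (\<Sum>i<r. C i (fst (h i) - 1 - fst n, snd (h i) - 1 - snd n) (0,0))"
  proof -
    have eqi: "(\<Sum>k. (if fst (h i) - 1 - fst n = of_nat (fst k) \<and> snd (h i) - 1 - snd n = of_nat (snd k)
       then diag_der scale (fst k) (snd k) (C i) (0,0) else 0)) = C i (fst (h i) - 1 - fst n, snd (h i) - 1 - snd n) (0,0)"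
      if i: "i < r" for i
    proof (rule Sum_any_natpair)
      fix k assume "fst (h i) - 1 - fst n = of_nat (fst k)" "snd (h i) - 1 - snd n = of_nat (snd k)"
      then show "diag_der scale (fst k) (snd k) (C i) (0,0) = C i (fst (h i) - 1 - fst n, snd (h i) - 1 - snd n) (0,0)"
        using diag_at0[OF vector_space_axioms Cre_i[OF i]] by simp
    next
      assume "\<not> (\<exists>k. fst (h i) - 1 - fst n = of_nat (fst k) \<and> snd (h i) - 1 - snd n = of_nat (snd k))"
      then have "\<not> in_trans (0,0) (fst (h i) - 1 - fst n, snd (h i) - 1 - snd n)"
        unfolding in_trans_def by auto
      then show "C i (fst (h i) - 1 - fst n, snd (h i) - 1 - snd n) (0,0) = 0" using Cre_i[OF i] by blast
    qed
    have neg: "negm1 (-1, -1) = ((0::'k), (0::'k))" by (simp add: negm1_def)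
    show ?thesis unfolding s1_def nth_prod_C neg by (rule sum.cong[OF refl]) (simp add: eqi)
  qed
  also have "\<dots> = a (negm1 (negm1 n)) (s1 one b)" unfolding a_on_s f_def
    by (intro sum.cong refl) (simp add: negm1_def algebra_simps)
  finally show ?thesis by simp
qed

lemma nth_prod_cre: "creative1 one (nth_prod scale r h c n)"
  unfolding creative1_def
proof (intro allI impI)
  fix m assume nz: "nth_prod scale r h c n m one \<noteq> 0"
  obtain i where i: "i \<in> {..<r}" and nzi: "(\<Sum>k.
      (if fst (h i) - 1 - fst n = of_nat (fst k) \<and> snd (h i) - 1 - snd n = of_nat (snd k)
       then diag_der scale (fst k) (snd k) (C i) (negm1 m) else 0)) \<noteq> 0"
    using sum.not_neutral_contains_not_neutral[OF nz[unfolded nth_prod_C]] by blast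
  obtain k where "(if fst (h i) - 1 - fst n = of_nat (fst k) \<and> snd (h i) - 1 - snd n = of_nat (snd k)
       then diag_der scale (fst k) (snd k) (C i) (negm1 m) else 0) \<noteq> 0"
    using nzi by (rule Sum_any.not_neutral_obtains_not_neutral)
  then have "diag_der scale (fst k) (snd k) (C i) (negm1 m) \<noteq> 0" by (auto split: if_splits)
  then show "in_trans (0,0) (negm1 m)" using diag_nonzero[OF vector_space_axioms Cre_i] i by blast
qed

end


lemma lin_diff: "Vector_Spaces.linear sa sb f \<Longrightarrow> f (x - y) = f x - f y"
  by (simp add: Vector_Spaces.linear_iff_module_hom module_hom.diff)

locale thm4 = thm_ctx scale \<sigma> one a b r h c
  for scale :: "'k::field_char_0 \<Rightarrow> 'v::ab_group_add \<Rightarrow> 'v"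
    and \<sigma> one a b r h c +
  fixes T Tb :: "'v \<Rightarrow> 'v"
  assumes linT: "Vector_Spaces.linear scale scale T"
    and linTb: "Vector_Spaces.linear scale scale Tb"
    and tc: "transl_cov scale T Tb a"
    and sc: "strongly_creative scale one T Tb b"
begin

lemma expW_lin: "expW T Tb i j (x + y) = expW T Tb i j x + expW T Tb i j y \<and>
    expW T Tb i j (scale u x) = scale u (expW T Tb i j x)"
proof (induction i arbitrary: j x y)
  case 0
  show ?case
    by (induction j) (simp_all add: lin_add[OF linTb] lin_scale[OF linTb])
next
  case (Suc i)
  note outer = Suc.IH
  show ?case
  proof (induction j)
    case 0 then show ?case using outer by (simp add: lin_add[OF linT] lin_scale[OF linT])
  next
    case (Suc j) then show ?case using outer
      by (simp add: lin_add[OF linT] lin_scale[OF linT] lin_add[OF linTb] lin_scale[OF linTb] scale_right_distrib algebra_simps)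
  qed
qed

lemma expW_add: "expW T Tb i j (x + y) = expW T Tb i j x + expW T Tb i j y"
  using expW_lin by blast
lemma expW_scale: "expW T Tb i j (scale u x) = scale u (expW T Tb i j x)"
  using expW_lin by blast

definition W :: "nat \<times> nat \<Rightarrow> 'v \<Rightarrow> 'v" where
  "W q x = scale (inverse (fact (fst q + snd q))) (expW T Tb (fst q) (snd q) x)"

lemma linW: "Vector_Spaces.linear scale scale (W q)"
proof -
  have "module_hom scale scale (W q)"
    by unfold_locales (simp_all add: W_def expW_add expW_scale scale_right_distrib)
  then show ?thesis by (simp add: Vector_Spaces.linear_iff_module_hom)
qed

lemma W00: "W (0,0) x = x" by (simp add: W_def)

lemma Wrec: "scale (of_nat (q1 + q2)) (W (q1, q2) x) =
   (if 0 < q1 then T (W (q1 - 1, q2) x) else 0) + (if 0 < q2 then Tb (W (q1, q2 - 1) x) else 0)"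
proof (cases q1)
  case 0
  then show ?thesis
  proof (cases q2)
    case 0 then show ?thesis using \<open>q1 = 0\<close> by simp
  next
    case (Suc j)
    then show ?thesis using \<open>q1 = 0\<close>
      by (simp add: W_def lin_scale[OF linTb] del: of_nat_Suc, (simp add: field_simps)?)
  qed
next
  case (Suc i)
  then show ?thesis
  proof (cases q2)
    case 0
    then show ?thesis using \<open>q1 = Suc i\<close>
      by (simp add: W_def lin_scale[OF linT] del: of_nat_Suc, (simp add: field_simps)?)
  next
    case (Suc j)
    have fi: "of_nat (Suc n) * inverse (fact (Suc n) :: 'k) = inverse (fact n)" for n
      by (simp add: fact_Suc del: of_nat_Suc)
    have "scale (of_nat (q1 + q2)) (W (q1, q2) x) = scale (of_nat (Suc (Suc (i + j))) * inverse (fact (Suc (Suc (i + j)))))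
        (T (expW T Tb i (Suc j) x) + Tb (expW T Tb (Suc i) j x))"
      using Suc \<open>q1 = Suc i\<close> by (simp add: W_def del: of_nat_Suc fact_Suc)
    also have "\<dots> = scale (inverse (fact (Suc (i + j)))) (T (expW T Tb i (Suc j) x) + Tb (expW T Tb (Suc i) j x))"
      by (simp only: fi)
    also have "\<dots> = T (W (q1 - 1, q2) x) + Tb (W (q1, q2 - 1) x)"
      using Suc \<open>q1 = Suc i\<close>
      by (simp add: W_def lin_scale[OF linT] lin_scale[OF linTb] scale_right_distrib del: fact_Suc)
    finally show ?thesis using Suc \<open>q1 = Suc i\<close> by simp
  qed
qed

lemma aT: "a (negm1 p) (T y) = T (a (negm1 p) y) - scale (fst p + 1) (a (negm1 (fst p + 1, snd p)) y)"
proof -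
  have "T (a (negm1 p) y) - a (negm1 p) (T y) = scale (- fst (negm1 p)) (a (fst (negm1 p) - 1, snd (negm1 p)) y)"
    using tc unfolding transl_cov_def by blast
  moreover have "(fst (negm1 p) - 1, snd (negm1 p)) = negm1 (fst p + 1, snd p)" by (simp add: negm1_def)
  moreover have "- fst (negm1 p) = fst p + 1" by (simp add: negm1_def)
  ultimately show ?thesis by (simp add: algebra_simps)
qed

lemma aTb: "a (negm1 p) (Tb y) = Tb (a (negm1 p) y) - scale (snd p + 1) (a (negm1 (fst p, snd p + 1)) y)"
proof -
  have "Tb (a (negm1 p) y) - a (negm1 p) (Tb y) = scale (- snd (negm1 p)) (a (fst (negm1 p), snd (negm1 p) - 1) y)"
    using tc unfolding transl_cov_def by blast
  moreover have "(fst (negm1 p), snd (negm1 p) - 1) = negm1 (fst p, snd p + 1)" by (simp add: negm1_def)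
  moreover have "- snd (negm1 p) = snd p + 1" by (simp add: negm1_def)
  ultimately show ?thesis by (simp add: algebra_simps)
qed

definition vv :: "'v \<Rightarrow> nat \<times> nat \<Rightarrow> 'k \<times> 'k \<Rightarrow> 'v" where
  "vv x l p = scale ((-1) ^ (fst l + snd l) * ((fst p + of_nat (fst l)) gchoose fst l) * ((snd p + of_nat (snd l)) gchoose snd l))
      (a (negm1 (fst p + of_nat (fst l), snd p + of_nat (snd l))) x)"

lemma ring_aux:
  fixes G1 G0 B X :: "'k"
  assumes "X * G0 = of_nat l * G0 + of_nat (Suc l) * G1"
  shows "of_nat (Suc l) * ((-1)^(Suc l + m) * G1 * B) = - (X - of_nat l) * ((-1)^(l + m) * G0 * B)"
proof -
  have e: "of_nat (Suc l) * G1 = (X - of_nat l) * G0" using assms by (simp add: algebra_simps)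
  have "of_nat (Suc l) * ((-1)^(Suc l + m) * G1 * B) = - ((-1)^(l + m) * B) * (of_nat (Suc l) * G1)"
    by (simp add: algebra_simps)
  also have "\<dots> = - (X - of_nat l) * ((-1)^(l + m) * G0 * B)" unfolding e by (simp add: algebra_simps)
  finally show ?thesis .
qed

lemma ring_aux2:
  fixes G1 G0 B X :: "'k"
  assumes "X * G0 = of_nat l * G0 + of_nat (Suc l) * G1"
  shows "of_nat (Suc l) * ((-1)^(m + Suc l) * B * G1) = - (X - of_nat l) * ((-1)^(m + l) * B * G0)"
  using ring_aux[OF assms, of m B] by (simp add: algebra_simps)

lemma vv_shift1: "scale (of_nat (Suc l1)) (vv x (Suc l1, l2) p) = scale (- (fst p + 1)) (vv x (l1, l2) (fst p + 1, snd p))"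
proof -
  define X where "X = fst p + of_nat (Suc l1)"
  define B where "B = (snd p + of_nat l2) gchoose l2"
  have A: "vv x (Suc l1, l2) p = scale ((-1)^(Suc l1 + l2) * (X gchoose Suc l1) * B) (a (negm1 (X, snd p + of_nat l2)) x)"
    by (simp only: vv_def fst_conv snd_conv X_def B_def)
  have eqX: "fst p + 1 + of_nat l1 = X" by (simp add: X_def)
  have B': "vv x (l1, l2) (fst p + 1, snd p) = scale ((-1)^(l1 + l2) * (X gchoose l1) * B) (a (negm1 (X, snd p + of_nat l2)) x)"
    by (simp only: vv_def fst_conv snd_conv eqX B_def)
  have Xl: "X - of_nat l1 = fst p + 1" by (simp add: X_def)
  show ?thesis unfolding A B' scale_scale
    by (simp only: ring_aux[OF gbinomial_mult_1[of X l1]] Xl)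
qed

lemma vv_shift2: "scale (of_nat (Suc l2)) (vv x (l1, Suc l2) p) = scale (- (snd p + 1)) (vv x (l1, l2) (fst p, snd p + 1))"
proof -
  define X where "X = snd p + of_nat (Suc l2)"
  define B where "B = (fst p + of_nat l1) gchoose l1"
  have A: "vv x (l1, Suc l2) p = scale ((-1)^(l1 + Suc l2) * B * (X gchoose Suc l2)) (a (negm1 (fst p + of_nat l1, X)) x)"
    by (simp only: vv_def fst_conv snd_conv X_def B_def)
  have eqX: "snd p + 1 + of_nat l2 = X" by (simp add: X_def)
  have B': "vv x (l1, l2) (fst p, snd p + 1) = scale ((-1)^(l1 + l2) * B * (X gchoose l2)) (a (negm1 (fst p + of_nat l1, X)) x)"
    by (simp only: vv_def fst_conv snd_conv eqX B_def)
  have Xl: "X - of_nat l2 = snd p + 1" by (simp add: X_def)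
  show ?thesis unfolding A B' scale_scale
    by (simp only: ring_aux2[OF gbinomial_mult_1[of X l2]] Xl)
qed

end


context thm4
begin

definition R :: "'v \<Rightarrow> nat \<Rightarrow> nat \<Rightarrow> 'k \<times> 'k \<Rightarrow> 'v" where
  "R x q1 q2 p = (\<Sum>l1\<le>q1. \<Sum>l2\<le>q2. W (q1 - l1, q2 - l2) (vv x (l1, l2) p))"

lemma I1: "scale (of_nat (q1 + q2)) (R x q1 q2 p) =
    (\<Sum>l1\<le>q1. \<Sum>l2\<le>q2. if l1 < q1 then T (W (q1 - l1 - 1, q2 - l2) (vv x (l1,l2) p)) else 0)
  + (\<Sum>l1\<le>q1. \<Sum>l2\<le>q2. if l2 < q2 then Tb (W (q1 - l1, q2 - l2 - 1) (vv x (l1,l2) p)) else 0)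
  + (\<Sum>l1\<le>q1. \<Sum>l2\<le>q2. W (q1 - l1, q2 - l2) (scale (of_nat l1) (vv x (l1,l2) p)))
  + (\<Sum>l1\<le>q1. \<Sum>l2\<le>q2. W (q1 - l1, q2 - l2) (scale (of_nat l2) (vv x (l1,l2) p)))"
proof -
  have trm: "scale (of_nat (q1 + q2)) (W (q1 - l1, q2 - l2) (vv x (l1, l2) p)) =
      (if l1 < q1 then T (W (q1 - l1 - 1, q2 - l2) (vv x (l1,l2) p)) else 0)
    + (if l2 < q2 then Tb (W (q1 - l1, q2 - l2 - 1) (vv x (l1,l2) p)) else 0)
    + W (q1 - l1, q2 - l2) (scale (of_nat l1) (vv x (l1,l2) p))
    + W (q1 - l1, q2 - l2) (scale (of_nat l2) (vv x (l1,l2) p))"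
    if "l1 \<le> q1" "l2 \<le> q2" for l1 l2
  proof -
    have n: "(of_nat (q1 + q2) :: 'k) = of_nat ((q1 - l1) + (q2 - l2)) + of_nat l1 + of_nat l2"
      using that by (simp add: of_nat_diff)
    have "scale (of_nat (q1 + q2)) (W (q1 - l1, q2 - l2) (vv x (l1, l2) p)) =
        scale (of_nat ((q1 - l1) + (q2 - l2))) (W (q1 - l1, q2 - l2) (vv x (l1, l2) p))
      + W (q1 - l1, q2 - l2) (scale (of_nat l1) (vv x (l1,l2) p))
      + W (q1 - l1, q2 - l2) (scale (of_nat l2) (vv x (l1,l2) p))"
      unfolding n by (simp add: scale_left_distrib lin_scale[OF linW])
    also have "scale (of_nat ((q1 - l1) + (q2 - l2))) (W (q1 - l1, q2 - l2) (vv x (l1, l2) p)) =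
        (if l1 < q1 then T (W (q1 - l1 - 1, q2 - l2) (vv x (l1,l2) p)) else 0)
      + (if l2 < q2 then Tb (W (q1 - l1, q2 - l2 - 1) (vv x (l1,l2) p)) else 0)"
      unfolding Wrec using that by simp
    finally show ?thesis .
  qed
  show ?thesis unfolding R_def scale_sum_right
    apply (simp only: sum.distrib[symmetric])
    apply (intro sum.cong refl)
    apply (simp only: trm atMost_iff)
    done
qed

lemma I2: "(\<Sum>l1\<le>q1. \<Sum>l2\<le>q2. if l1 < q1 then T (W (q1 - l1 - 1, q2 - l2) (vv x (l1,l2) p)) else 0)
    = (if 0 < q1 then T (R x (q1 - 1) q2 p) else 0)"
proof (cases q1)
  case 0 then show ?thesis by simp
next
  case (Suc m)
  have "(\<Sum>l1\<le>q1. \<Sum>l2\<le>q2. if l1 < q1 then T (W (q1 - l1 - 1, q2 - l2) (vv x (l1,l2) p)) else 0)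
      = (\<Sum>l1\<le>m. \<Sum>l2\<le>q2. T (W (m - l1, q2 - l2) (vv x (l1,l2) p)))"
    unfolding Suc sum.atMost_Suc by (simp add: Suc_diff_le)
  also have "\<dots> = T (R x m q2 p)" unfolding R_def by (simp add: lin_sum[OF linT])
  finally show ?thesis using Suc by simp
qed

lemma I3: "(\<Sum>l1\<le>q1. \<Sum>l2\<le>q2. if l2 < q2 then Tb (W (q1 - l1, q2 - l2 - 1) (vv x (l1,l2) p)) else 0)
    = (if 0 < q2 then Tb (R x q1 (q2 - 1) p) else 0)"
proof (cases q2)
  case 0 then show ?thesis by simp
next
  case (Suc m)
  have "(\<Sum>l1\<le>q1. \<Sum>l2\<le>q2. if l2 < q2 then Tb (W (q1 - l1, q2 - l2 - 1) (vv x (l1,l2) p)) else 0)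
      = (\<Sum>l1\<le>q1. \<Sum>l2\<le>m. Tb (W (q1 - l1, m - l2) (vv x (l1,l2) p)))"
    unfolding Suc sum.atMost_Suc by (simp add: Suc_diff_le)
  also have "\<dots> = Tb (R x q1 m p)" unfolding R_def by (simp add: lin_sum[OF linTb])
  finally show ?thesis using Suc by simp
qed

lemma I4: "(\<Sum>l1\<le>q1. \<Sum>l2\<le>q2. W (q1 - l1, q2 - l2) (scale (of_nat l1) (vv x (l1,l2) p)))
    = (if 0 < q1 then scale (- (fst p + 1)) (R x (q1 - 1) q2 (fst p + 1, snd p)) else 0)"
proof (cases q1)
  case 0 then show ?thesis by (simp add: lin_zero[OF linW])
next
  case (Suc m)
  have "(\<Sum>l1\<le>q1. \<Sum>l2\<le>q2. W (q1 - l1, q2 - l2) (scale (of_nat l1) (vv x (l1,l2) p)))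
      = (\<Sum>l1\<le>m. \<Sum>l2\<le>q2. W (m - l1, q2 - l2) (scale (of_nat (Suc l1)) (vv x (Suc l1,l2) p)))"
    unfolding Suc sum.atMost_Suc_shift by (simp add: lin_zero[OF linW] del: of_nat_Suc)
  also have "\<dots> = (\<Sum>l1\<le>m. \<Sum>l2\<le>q2. scale (- (fst p + 1)) (W (m - l1, q2 - l2) (vv x (l1,l2) (fst p + 1, snd p))))"
    by (simp only: vv_shift1 lin_scale[OF linW])
  also have "\<dots> = scale (- (fst p + 1)) (R x m q2 (fst p + 1, snd p))"
    unfolding R_def by (simp add: scale_sum_right)
  finally show ?thesis using Suc by simp
qed

lemma I5: "(\<Sum>l1\<le>q1. \<Sum>l2\<le>q2. W (q1 - l1, q2 - l2) (scale (of_nat l2) (vv x (l1,l2) p)))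
    = (if 0 < q2 then scale (- (snd p + 1)) (R x q1 (q2 - 1) (fst p, snd p + 1)) else 0)"
proof (cases q2)
  case 0 then show ?thesis by (simp add: lin_zero[OF linW])
next
  case (Suc m)
  have "(\<Sum>l1\<le>q1. \<Sum>l2\<le>q2. W (q1 - l1, q2 - l2) (scale (of_nat l2) (vv x (l1,l2) p)))
      = (\<Sum>l1\<le>q1. \<Sum>l2\<le>m. W (q1 - l1, m - l2) (scale (of_nat (Suc l2)) (vv x (l1, Suc l2) p)))"
    unfolding Suc sum.atMost_Suc_shift by (simp add: lin_zero[OF linW] del: of_nat_Suc)
  also have "\<dots> = (\<Sum>l1\<le>q1. \<Sum>l2\<le>m. scale (- (snd p + 1)) (W (q1 - l1, m - l2) (vv x (l1,l2) (fst p, snd p + 1))))"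
    by (simp only: vv_shift2 lin_scale[OF linW])
  also have "\<dots> = scale (- (snd p + 1)) (R x q1 m (fst p, snd p + 1))"
    unfolding R_def by (simp add: scale_sum_right)
  finally show ?thesis using Suc by simp
qed

lemma E: "a (negm1 p) (W (q1, q2) x) = R x q1 q2 p"
proof (induction "q1 + q2" arbitrary: q1 q2 p rule: less_induct)
  case less
  show ?case
  proof (cases "q1 + q2 = 0")
    case True
    then have "q1 = 0" "q2 = 0" by auto
    then show ?thesis by (simp add: R_def W00 vv_def)
  next
    case False
    have IH1: "a (negm1 p') (W (q1 - Suc 0, q2) x) = R x (q1 - Suc 0) q2 p'" if "0 < q1" for p'
      using less that by simp
    have IH2: "a (negm1 p') (W (q1, q2 - Suc 0) x) = R x q1 (q2 - Suc 0) p'" if "0 < q2" for p'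
      using less that by simp
    have "scale (of_nat (q1 + q2)) (a (negm1 p) (W (q1, q2) x))
        = a (negm1 p) ((if 0 < q1 then T (W (q1 - 1, q2) x) else 0) + (if 0 < q2 then Tb (W (q1, q2 - 1) x) else 0))"
      by (subst lin_scale[OF a_lin, symmetric]) (simp only: Wrec)
    also have "\<dots> = (if 0 < q1 then T (R x (q1 - 1) q2 p) - scale (fst p + 1) (R x (q1 - 1) q2 (fst p + 1, snd p)) else 0)
        + (if 0 < q2 then Tb (R x q1 (q2 - 1) p) - scale (snd p + 1) (R x q1 (q2 - 1) (fst p, snd p + 1)) else 0)"
    proof -
      have h1: "a (negm1 p) (T (W (q1 - Suc 0, q2) x)) = T (R x (q1 - Suc 0) q2 p) - scale (fst p + 1) (R x (q1 - Suc 0) q2 (fst p + 1, snd p))"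
        if "0 < q1" by (simp add: aT IH1[OF that])
      have h2: "a (negm1 p) (Tb (W (q1, q2 - Suc 0) x)) = Tb (R x q1 (q2 - Suc 0) p) - scale (snd p + 1) (R x q1 (q2 - Suc 0) (fst p, snd p + 1))"
        if "0 < q2" by (simp add: aTb IH2[OF that])
      show ?thesis
        by (simp add: lin_add[OF a_lin] if_distrib[of "a (negm1 p)"] lin_zero[OF a_lin] h1 h2 cong: if_cong split del: if_split)
    qed
    also have "\<dots> = scale (of_nat (q1 + q2)) (R x q1 q2 p)"
      unfolding I1 I2 I3 I4 I5 by (simp add: algebra_simps)
    finally have fin: "scale (of_nat (q1 + q2)) (a (negm1 p) (W (q1, q2) x)) = scale (of_nat (q1 + q2)) (R x q1 q2 p)" .
    have nz: "(of_nat (q1 + q2) :: 'k) \<noteq> 0" using False by (simp only: of_nat_eq_0_iff) simp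
    show ?thesis using fin nz scale_cancel_left by blast
  qed
qed

end


lemma tri1:
  fixes g :: "nat \<Rightarrow> nat \<Rightarrow> 'a::comm_monoid_add" and n :: nat
  shows "(\<Sum>j\<le>n. \<Sum>q\<le>n - j. g j q) = (\<Sum>u\<le>n. \<Sum>j\<le>u. g j (u - j))"
proof -
  have "(\<Sum>j\<le>n. \<Sum>q\<le>n - j. g j q) = (\<Sum>(j, q)\<in>{(j, q). j + q \<le> n}. g j q)"
  proof -
    have "{(j, q). j + q \<le> n} = Sigma {..n} (\<lambda>j. {..n - j})" by auto
    then show ?thesis by (simp add: sum.Sigma)
  qed
  also have "\<dots> = (\<Sum>u\<le>n. \<Sum>j\<le>u. g j (u - j))" by (rule sum.triangle_reindex_eq)
  finally show ?thesis .
qed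

lemma tri2:
  fixes F :: "nat \<Rightarrow> nat \<Rightarrow> nat \<Rightarrow> nat \<Rightarrow> 'a::comm_monoid_add"
  shows "(\<Sum>j1\<le>n1. \<Sum>j2\<le>n2. \<Sum>q1\<le>n1 - j1. \<Sum>q2\<le>n2 - j2. F j1 j2 q1 q2)
   = (\<Sum>u1\<le>n1. \<Sum>u2\<le>n2. \<Sum>j1\<le>u1. \<Sum>j2\<le>u2. F j1 j2 (u1 - j1) (u2 - j2))"
proof -
  have "(\<Sum>j1\<le>n1. \<Sum>j2\<le>n2. \<Sum>q1\<le>n1 - j1. \<Sum>q2\<le>n2 - j2. F j1 j2 q1 q2)
      = (\<Sum>j1\<le>n1. \<Sum>q1\<le>n1 - j1. \<Sum>j2\<le>n2. \<Sum>q2\<le>n2 - j2. F j1 j2 q1 q2)"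
    by (rule sum.cong[OF refl]) (rule sum.swap)
  also have "\<dots> = (\<Sum>u1\<le>n1. \<Sum>j1\<le>u1. \<Sum>u2\<le>n2. \<Sum>j2\<le>u2. F j1 j2 (u1 - j1) (u2 - j2))"
    by (simp only: tri1)
  also have "\<dots> = (\<Sum>u1\<le>n1. \<Sum>u2\<le>n2. \<Sum>j1\<le>u1. \<Sum>j2\<le>u2. F j1 j2 (u1 - j1) (u2 - j2))"
    by (rule sum.cong[OF refl]) (rule sum.swap)
  finally show ?thesis .
qed

lemma vd1:
  fixes hh y :: "'k::field_char_0"
  shows "(\<Sum>j\<le>u. ((-1)^j * ((- hh) gchoose j)) * ((-1)^(u - j) * ((y + hh + of_nat u) gchoose (u - j))))
    = (-1)^u * ((y + of_nat u) gchoose u)"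
proof -
  have "(\<Sum>j\<le>u. ((-1)^j * ((- hh) gchoose j)) * ((-1)^(u - j) * ((y + hh + of_nat u) gchoose (u - j))))
      = (\<Sum>j\<le>u. (-1)^u * (((- hh) gchoose j) * ((y + hh + of_nat u) gchoose (u - j))))"
  proof (intro sum.cong refl)
    fix j assume "j \<in> {..u}"
    then have "(-1::'k)^j * (-1)^(u - j) = (-1)^u" by (simp add: power_add[symmetric])
    then show "((-1)^j * ((- hh) gchoose j)) * ((-1)^(u - j) * ((y + hh + of_nat u) gchoose (u - j)))
        = (-1)^u * (((- hh) gchoose j) * ((y + hh + of_nat u) gchoose (u - j)))"
      by (metis (no_types, lifting) mult.assoc mult.left_commute)
  qed
  also have "\<dots> = (-1)^u * ((- hh + (y + hh + of_nat u)) gchoose u)"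
  proof -
    have "(\<Sum>j\<le>u. ((- hh) gchoose j) * ((y + hh + of_nat u) gchoose (u - j))) = (- hh + (y + hh + of_nat u)) gchoose u"
      using gbinomial_Vandermonde[of "- hh" "y + hh + of_nat u" u] by (simp only: atLeast0AtMost)
    then show ?thesis by (simp only: sum_distrib_left[symmetric])
  qed
  finally show ?thesis by simp
qed

definition tn :: "'k::field_char_0 \<times> 'k \<Rightarrow> nat \<times> nat" where
  "tn y = (SOME n. y = (of_nat (fst n), of_nat (snd n)))"

lemma tn_of_nat: "tn ((of_nat n1, of_nat n2) :: 'k::field_char_0 \<times> 'k) = (n1, n2)"
proof -
  have "(of_nat n1, of_nat n2) = ((of_nat (fst (n1,n2)), of_nat (snd (n1,n2))) :: 'k \<times> 'k)" by simp
  then have "((of_nat n1, of_nat n2) :: 'k \<times> 'k) = (of_nat (fst (tn ((of_nat n1, of_nat n2) :: 'k \<times> 'k))), of_nat (snd (tn ((of_nat n1, of_nat n2) :: 'k \<times> 'k))))"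
    unfolding tn_def by (rule someI)
  then show ?thesis by (simp add: prod_eq_iff)
qed

context thm4
begin

definition s :: 'v where "s = s1 one b"

lemma b_W: "b (negm1 (of_nat n1, of_nat n2)) one = W (n1, n2) s"
  using sc unfolding strongly_creative_def W_def s_def by simp

definition Dn :: "nat \<Rightarrow> 'k \<times> 'k \<Rightarrow> nat \<times> nat \<Rightarrow> 'v" where
  "Dn i x n = (\<Sum>q1\<le>fst n. \<Sum>q2\<le>snd n. W (fst n - q1, snd n - q2)
      (scale ((-1)^(q1 + q2) * ((fst x + of_nat q1) gchoose q1) * ((snd x + of_nat q2) gchoose q2))
        (C i (fst x + of_nat q1, snd x + of_nat q2) (0,0))))"

definition D :: "nat \<Rightarrow> 'k \<times> 'k \<Rightarrow> 'k \<times> 'k \<Rightarrow> 'v" where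
  "D i x y = (if in_trans (0,0) y then Dn i x (tn y) else 0)"

lemma D_nat: "D i x (of_nat n1, of_nat n2) = Dn i x (n1, n2)"
  by (simp add: D_def tn_of_nat in_trans_def)

lemma D_supp: "i < r \<Longrightarrow> D i x y \<noteq> 0 \<Longrightarrow> in_trans (0,0) x \<and> in_trans (0,0) y"
proof -
  assume i: "i < r" and nz: "D i x y \<noteq> 0"
  then have y: "in_trans (0,0) y" by (simp add: D_def split: if_splits)
  from nz y have "Dn i x (tn y) \<noteq> 0" by (simp add: D_def)
  then obtain q1 q2 where "W (fst (tn y) - q1, snd (tn y) - q2)
      (scale ((-1)^(q1 + q2) * ((fst x + of_nat q1) gchoose q1) * ((snd x + of_nat q2) gchoose q2))
        (C i (fst x + of_nat q1, snd x + of_nat q2) (0,0))) \<noteq> 0"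
    unfolding Dn_def by (meson sum.not_neutral_contains_not_neutral)
  then have b1: "(fst x + of_nat q1) gchoose q1 \<noteq> 0" and b2: "(snd x + of_nat q2) gchoose q2 \<noteq> 0"
    and Cnz: "C i (fst x + of_nat q1, snd x + of_nat q2) (0,0) \<noteq> 0"
    using lin_zero[OF linW] by auto
  then have "in_trans (0,0) (fst x + of_nat q1, snd x + of_nat q2)" using Ccre i by blast
  then obtain X1 X2 :: nat where X: "fst x + of_nat q1 = of_nat X1" "snd x + of_nat q2 = of_nat X2"
    unfolding in_trans_def by auto
  have "q1 \<le> X1" using b1 X(1) gch_nat_nz by metis
  have "q2 \<le> X2" using b2 X(2) gch_nat_nz by metis
  have "fst x = of_nat (X1 - q1)" using X(1) \<open>q1 \<le> X1\<close> by (simp add: of_nat_diff algebra_simps)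
  moreover have "snd x = of_nat (X2 - q2)" using X(2) \<open>q2 \<le> X2\<close> by (simp add: of_nat_diff algebra_simps)
  ultimately have "in_trans (0,0) x" unfolding in_trans_def
    by (intro exI[of _ "X1 - q1"] exI[of _ "X2 - q2"]) (simp add: prod_eq_iff)
  with y show ?thesis by simp
qed

lemma mulZW_box:
  fixes F :: "'k \<times> 'k \<Rightarrow> 'k \<times> 'k \<Rightarrow> 'v"
  assumes wsupp: "\<forall>x y. F x y \<noteq> 0 \<longrightarrow> in_trans (0,0) y"
  shows "mulZW scale (negp hh) F p (of_nat n1, of_nat n2) = (\<Sum>j1\<le>n1. \<Sum>j2\<le>n2. scale (cZ hh (j1, j2))
     (F (fst p + fst hh + of_nat j1, snd p + snd hh + of_nat j2) (of_nat (n1 - j1), of_nat (n2 - j2))))"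
proof -
  have "mulZW scale (negp hh) F p (of_nat n1, of_nat n2) = (\<Sum>ij\<in>{..n1}\<times>{..n2}. scale (cZ hh ij)
     (F (fst p + fst hh + of_nat (fst ij), snd p + snd hh + of_nat (snd ij)) (of_nat n1 - of_nat (fst ij), of_nat n2 - of_nat (snd ij))))"
    unfolding mulZW_negp fst_conv snd_conv
  proof (rule Sum_any.expand_superset)
    show "{ij. scale (cZ hh ij) (F (fst p + fst hh + of_nat (fst ij), snd p + snd hh + of_nat (snd ij))
         (of_nat n1 - of_nat (fst ij), of_nat n2 - of_nat (snd ij))) \<noteq> 0} \<subseteq> {..n1} \<times> {..n2}"
    proof
      fix ij assume "ij \<in> {ij. scale (cZ hh ij) (F (fst p + fst hh + of_nat (fst ij), snd p + snd hh + of_nat (snd ij))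
         (of_nat n1 - of_nat (fst ij), of_nat n2 - of_nat (snd ij))) \<noteq> 0}"
      then have "in_trans (0,0) ((of_nat n1 - of_nat (fst ij), of_nat n2 - of_nat (snd ij)) :: 'k \<times> 'k)"
        using wsupp by auto
      then obtain m1 m2 :: nat where "(of_nat n1 - of_nat (fst ij) :: 'k) = of_nat m1" "(of_nat n2 - of_nat (snd ij) :: 'k) = of_nat m2"
        unfolding in_trans_def by auto
      then have "(of_nat n1 :: 'k) = of_nat (fst ij + m1)" "(of_nat n2 :: 'k) = of_nat (snd ij + m2)"
        by (simp_all add: algebra_simps)
      then have "n1 = fst ij + m1" "n2 = snd ij + m2" using of_nat_eq_iff by blast+
      then show "ij \<in> {..n1} \<times> {..n2}" by (cases ij) auto
    qed
  qed simp
  also have "\<dots> = (\<Sum>j1\<le>n1. \<Sum>j2\<le>n2. scale (cZ hh (j1, j2))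
     (F (fst p + fst hh + of_nat j1, snd p + snd hh + of_nat j2) (of_nat n1 - of_nat j1, of_nat n2 - of_nat j2)))"
    by (simp add: sum.cartesian_product split_def)
  also have "\<dots> = (\<Sum>j1\<le>n1. \<Sum>j2\<le>n2. scale (cZ hh (j1, j2))
     (F (fst p + fst hh + of_nat j1, snd p + snd hh + of_nat j2) (of_nat (n1 - j1), of_nat (n2 - j2))))"
    by (intro sum.cong refl) (simp add: of_nat_diff)
  finally show ?thesis .
qed

lemma mulZW_nonnat:
  fixes F :: "'k \<times> 'k \<Rightarrow> 'k \<times> 'k \<Rightarrow> 'v"
  assumes wsupp: "\<forall>x y. F x y \<noteq> 0 \<longrightarrow> in_trans (0,0) y"
    and nq: "\<not> in_trans (0,0) q"
  shows "mulZW scale (negp hh) F p q = 0"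
proof (rule ccontr)
  assume "mulZW scale (negp hh) F p q \<noteq> 0"
  then obtain i j :: nat where "F (fst p + fst hh + of_nat i, snd p + snd hh + of_nat j) (fst q - of_nat i, snd q - of_nat j) \<noteq> 0"
    by (rule mulZW_nonzero_obtain)
  then have "in_trans (0,0) (fst q - of_nat i, snd q - of_nat j)" using wsupp by blast
  then obtain m1 m2 :: nat where "fst q - of_nat i = of_nat m1" "snd q - of_nat j = of_nat m2"
    unfolding in_trans_def by auto
  then have "q = (of_nat (m1 + i), of_nat (m2 + j))" by (simp add: prod_eq_iff algebra_simps)
  then have "in_trans (0,0) q" unfolding in_trans_def by (intro exI[of _ "m1 + i"] exI[of _ "m2 + j"]) simp
  with nq show False by simp
qed

end


context thm4
begin

lemma D_wsupp: "i < r \<Longrightarrow> \<forall>x y. D i x y \<noteq> 0 \<longrightarrow> in_trans (0,0) y"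
  using D_supp by blast

lemma P2i:
  assumes i: "i < r"
  shows "mulZW scale (negp (h i)) (D i) p (of_nat n1, of_nat n2) = (\<Sum>u1\<le>n1. \<Sum>u2\<le>n2. W (n1 - u1, n2 - u2)
     (scale ((-1)^(u1 + u2) * ((fst p + of_nat u1) gchoose u1) * ((snd p + of_nat u2) gchoose u2))
       (C i (fst p + fst (h i) + of_nat u1, snd p + snd (h i) + of_nat u2) (0,0))))"
proof -
  define h1 where "h1 = fst (h i)"
  define h2 where "h2 = snd (h i)"
  define p1 where "p1 = fst p"
  define p2 where "p2 = snd p"
  define FF where "FF j1 j2 q1 q2 = W (n1 - j1 - q1, n2 - j2 - q2)
     (scale (cZ (h i) (j1, j2) * ((-1)^(q1 + q2) * ((p1 + h1 + of_nat j1 + of_nat q1) gchoose q1) * ((p2 + h2 + of_nat j2 + of_nat q2) gchoose q2)))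
       (C i (p1 + h1 + of_nat j1 + of_nat q1, p2 + h2 + of_nat j2 + of_nat q2) (0,0)))" for j1 j2 q1 q2
  define cc1 where "cc1 j1 u1 = ((-1)^j1 * ((- h1) gchoose j1)) * ((-1)^(u1 - j1) * ((p1 + h1 + of_nat u1) gchoose (u1 - j1)))" for j1 u1
  define cc2 where "cc2 j2 u2 = ((-1)^j2 * ((- h2) gchoose j2)) * ((-1)^(u2 - j2) * ((p2 + h2 + of_nat u2) gchoose (u2 - j2)))" for j2 u2
  define Cc where "Cc u1 u2 = C i (p1 + h1 + of_nat u1, p2 + h2 + of_nat u2) (0,0)" for u1 u2
  have "mulZW scale (negp (h i)) (D i) p (of_nat n1, of_nat n2)
      = (\<Sum>j1\<le>n1. \<Sum>j2\<le>n2. scale (cZ (h i) (j1, j2))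
         (D i (p1 + h1 + of_nat j1, p2 + h2 + of_nat j2) (of_nat (n1 - j1), of_nat (n2 - j2))))"
    unfolding mulZW_box[OF D_wsupp[OF i]] h1_def h2_def p1_def p2_def ..
  also have "\<dots> = (\<Sum>j1\<le>n1. \<Sum>j2\<le>n2. \<Sum>q1\<le>n1 - j1. \<Sum>q2\<le>n2 - j2. FF j1 j2 q1 q2)"
    unfolding D_nat Dn_def FF_def fst_conv snd_conv
    by (simp add: scale_sum_right lin_scale[OF linW] diff_diff_left)
  also have "\<dots> = (\<Sum>u1\<le>n1. \<Sum>u2\<le>n2. \<Sum>j1\<le>u1. \<Sum>j2\<le>u2. FF j1 j2 (u1 - j1) (u2 - j2))"
    by (rule tri2)
  also have "\<dots> = (\<Sum>u1\<le>n1. \<Sum>u2\<le>n2. \<Sum>j1\<le>u1. \<Sum>j2\<le>u2. W (n1 - u1, n2 - u2) (scale (cc1 j1 u1 * cc2 j2 u2) (Cc u1 u2)))"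
  proof (intro sum.cong refl)
    fix u1 u2 j1 j2 assume "u1 \<in> {..n1}" "u2 \<in> {..n2}" "j1 \<in> {..u1}" "j2 \<in> {..u2}"
    then have le: "j1 \<le> u1" "u1 \<le> n1" "j2 \<le> u2" "u2 \<le> n2" by auto
    have e1: "n1 - j1 - (u1 - j1) = n1 - u1" "n2 - j2 - (u2 - j2) = n2 - u2" using le by auto
    have e2: "p1 + h1 + of_nat j1 + of_nat (u1 - j1) = p1 + h1 + of_nat u1"
      "p2 + h2 + of_nat j2 + of_nat (u2 - j2) = p2 + h2 + of_nat u2" using le by (simp_all add: of_nat_diff)
    have e3: "cZ (h i) (j1, j2) * ((-1)^((u1 - j1) + (u2 - j2)) * ((p1 + h1 + of_nat u1) gchoose (u1 - j1)) * ((p2 + h2 + of_nat u2) gchoose (u2 - j2)))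
        = cc1 j1 u1 * cc2 j2 u2"
      unfolding cZ_def cc1_def cc2_def h1_def h2_def by (simp add: power_add algebra_simps)
    show "FF j1 j2 (u1 - j1) (u2 - j2) = W (n1 - u1, n2 - u2) (scale (cc1 j1 u1 * cc2 j2 u2) (Cc u1 u2))"
      unfolding FF_def e1 e2 e3 Cc_def ..
  qed
  also have "\<dots> = (\<Sum>u1\<le>n1. \<Sum>u2\<le>n2. W (n1 - u1, n2 - u2) (scale ((\<Sum>j1\<le>u1. cc1 j1 u1) * (\<Sum>j2\<le>u2. cc2 j2 u2)) (Cc u1 u2)))"
    by (simp add: lin_sum[OF linW, symmetric] scale_sum_left[symmetric] sum_product)
  also have "\<dots> = (\<Sum>u1\<le>n1. \<Sum>u2\<le>n2. W (n1 - u1, n2 - u2)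
     (scale ((-1)^(u1 + u2) * ((fst p + of_nat u1) gchoose u1) * ((snd p + of_nat u2) gchoose u2))
       (C i (fst p + fst (h i) + of_nat u1, snd p + snd (h i) + of_nat u2) (0,0))))"
  proof (intro sum.cong refl)
    fix u1 u2
    have "(\<Sum>j1\<le>u1. cc1 j1 u1) = (-1)^u1 * ((p1 + of_nat u1) gchoose u1)"
      unfolding cc1_def by (rule vd1)
    moreover have "(\<Sum>j2\<le>u2. cc2 j2 u2) = (-1)^u2 * ((p2 + of_nat u2) gchoose u2)"
      unfolding cc2_def by (rule vd1)
    ultimately show "W (n1 - u1, n2 - u2) (scale ((\<Sum>j1\<le>u1. cc1 j1 u1) * (\<Sum>j2\<le>u2. cc2 j2 u2)) (Cc u1 u2)) =
      W (n1 - u1, n2 - u2) (scale ((-1)^(u1 + u2) * ((fst p + of_nat u1) gchoose u1) * ((snd p + of_nat u2) gchoose u2))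
       (C i (fst p + fst (h i) + of_nat u1, snd p + snd (h i) + of_nat u2) (0,0)))"
      unfolding Cc_def p1_def p2_def h1_def h2_def by (simp add: power_add algebra_simps)
  qed
  finally show ?thesis .
qed

lemma P2: "(\<Sum>i<r. mulZW scale (negp (h i)) (D i) p (of_nat n1, of_nat n2)) = a (negm1 p) (W (n1, n2) s)"
proof -
  have "(\<Sum>i<r. mulZW scale (negp (h i)) (D i) p (of_nat n1, of_nat n2))
     = (\<Sum>i<r. \<Sum>u1\<le>n1. \<Sum>u2\<le>n2. W (n1 - u1, n2 - u2)
     (scale ((-1)^(u1 + u2) * ((fst p + of_nat u1) gchoose u1) * ((snd p + of_nat u2) gchoose u2))
       (C i (fst p + fst (h i) + of_nat u1, snd p + snd (h i) + of_nat u2) (0,0))))"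
    by (rule sum.cong[OF refl]) (simp add: P2i)
  also have "\<dots> = (\<Sum>u1\<le>n1. \<Sum>u2\<le>n2. W (n1 - u1, n2 - u2)
     (scale ((-1)^(u1 + u2) * ((fst p + of_nat u1) gchoose u1) * ((snd p + of_nat u2) gchoose u2))
       (\<Sum>i<r. C i (fst p + fst (h i) + of_nat u1, snd p + snd (h i) + of_nat u2) (0,0))))"
    by (simp add: lin_sum[OF linW] scale_sum_right sum.swap[of _ "{..<r}"])
  also have "\<dots> = R s n1 n2 p"
    unfolding R_def vv_def
  proof (intro sum.cong refl)
    fix u1 u2
    have "(\<Sum>i<r. C i (fst p + fst (h i) + of_nat u1, snd p + snd (h i) + of_nat u2) (0,0))
        = a (negm1 (fst p + of_nat u1, snd p + of_nat u2)) s"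
      unfolding s_def a_on_s f_def by (intro sum.cong refl) (simp add: algebra_simps)
    then show "W (n1 - u1, n2 - u2) (scale ((-1)^(u1 + u2) * ((fst p + of_nat u1) gchoose u1) * ((snd p + of_nat u2) gchoose u2))
       (\<Sum>i<r. C i (fst p + fst (h i) + of_nat u1, snd p + snd (h i) + of_nat u2) (0,0))) =
      W (n1 - u1, n2 - u2) (scale ((-1) ^ (fst (u1, u2) + snd (u1, u2)) * ((fst p + of_nat (fst (u1, u2))) gchoose fst (u1, u2)) *
          ((snd p + of_nat (snd (u1, u2))) gchoose snd (u1, u2)))
        (a (negm1 (fst p + of_nat (fst (u1, u2)), snd p + of_nat (snd (u1, u2)))) s))"
      by simp
  qed
  also have "\<dots> = a (negm1 p) (W (n1, n2) s)" by (rule E[symmetric])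
  finally show ?thesis .
qed

end


lemma dd_sum: "(\<Sum>P\<le>u. of_nat ((P + k) choose k) * ((-1)^(u - P) * of_nat ((u + k) choose (u - P))))
    = (if u = 0 then 1 else (0::'k::field_char_0))"
proof -
  have "of_nat ((P + k) choose k) * ((-1)^(u - P) * of_nat ((u + k) choose (u - P)))
      = (of_nat ((u + k) choose k) * (-1)^u) * ((-1)^P * of_nat (u choose P) :: 'k)" if "P \<le> u" for P
  proof -
    have "(u + k) choose (u - P) = (u + k) choose (P + k)"
      using that binomial_symmetric[of "P + k" "u + k"] by simp
    moreover have "((u + k) choose (P + k)) * ((P + k) choose k) = ((u + k) choose k) * (u choose P)"
      using choose_mult[of k "P + k" "u + k"] that by simp
    ultimately have nat_eq: "((P + k) choose k) * ((u + k) choose (u - P)) = ((u + k) choose k) * (u choose P)"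
      by (simp add: mult.commute)
    have "(-1::'k)^(u - P) = (-1)^u * (-1)^P"
    proof -
      have "(-1::'k)^u = (-1)^(u - P) * (-1)^P" using that by (simp add: power_add[symmetric])
      then have "(-1::'k)^u * (-1)^P = (-1)^(u - P) * ((-1)^P * (-1)^P)" by simp
      also have "(-1::'k)^P * (-1)^P = 1" by (simp add: power_add[symmetric] flip: mult_2 power_even_eq)
      finally show ?thesis by simp
    qed
    then have "of_nat ((P + k) choose k) * ((-1)^(u - P) * of_nat ((u + k) choose (u - P)))
        = (-1)^u * (-1)^P * (of_nat (((P + k) choose k) * ((u + k) choose (u - P))) :: 'k)"
      by (simp add: algebra_simps)
    also have "\<dots> = (of_nat ((u + k) choose k) * (-1)^u) * ((-1)^P * of_nat (u choose P))"
      unfolding nat_eq by (simp add: algebra_simps)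
    finally show ?thesis .
  qed
  then have "(\<Sum>P\<le>u. of_nat ((P + k) choose k) * ((-1)^(u - P) * of_nat ((u + k) choose (u - P))))
      = (of_nat ((u + k) choose k) * (-1)^u) * (\<Sum>P\<le>u. (-1)^P * of_nat (u choose P) :: 'k)"
    by (simp add: sum_distrib_left)
  also have "\<dots> = (if u = 0 then 1 else 0)"
  proof (cases "u = 0")
    case True then show ?thesis by simp
  next
    case False then show ?thesis using choose_alternating_sum[of u] by simp
  qed
  finally show ?thesis .
qed

context vsk
begin

lemma LT0:
  fixes F :: "'k \<times> 'k \<Rightarrow> 'k \<times> 'k \<Rightarrow> 'v"
  assumes vs: "vseries2 F"
    and zero: "\<forall>p q. mulZW scale (negp h) F p q = 0"
  shows "F p0 q0 = 0"
proof (rule ccontr)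
  assume F0: "F p0 q0 \<noteq> 0"
  define D where "D = {ab::nat\<times>nat. \<exists>p. F p (fst q0 - of_nat (fst ab), snd q0 - of_nat (snd ab)) \<noteq> 0}"
  have finD: "finite D" unfolding D_def by (rule fin_below[OF vs])
  have "(0,0) \<in> D" unfolding D_def using F0 by (cases p0) auto
  have bnd: "\<forall>y. y \<in> D \<longrightarrow> fst y + snd y < Suc (Max ((\<lambda>y. fst y + snd y) ` D))"
    using finD by (auto simp: le_imp_less_Suc)
  obtain ab where abD: "ab \<in> D" and abmax: "\<forall>y\<in>D. fst y + snd y \<le> fst ab + snd ab"
    using Lattices_Big.ex_has_greatest_nat[of "\<lambda>y. y \<in> D", OF \<open>(0,0) \<in> D\<close> bnd] by blast
  define q1 where "q1 = (fst q0 - of_nat (fst ab), snd q0 - of_nat (snd ab))"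
  obtain p1 where F1: "F p1 q1 \<noteq> 0" using abD unfolding D_def q1_def by blast
  have "mulZW scale (negp h) F (fst p1 - fst h, snd p1 - snd h) q1 = F p1 q1"
  proof -
    have "mulZW scale (negp h) F (fst p1 - fst h, snd p1 - snd h) q1 =
      Sum_any (\<lambda>ij. scale (cZ h ij) (F (fst p1 + of_nat (fst ij), snd p1 + of_nat (snd ij))
         (fst q1 - of_nat (fst ij), snd q1 - of_nat (snd ij))))"
      unfolding mulZW_negp by simp
    also have "\<dots> = scale (cZ h (0,0)) (F (fst p1 + of_nat (fst (0::nat,0::nat)), snd p1 + of_nat (snd (0::nat,0::nat)))
         (fst q1 - of_nat (fst (0::nat,0::nat)), snd q1 - of_nat (snd (0::nat,0::nat))))"
    proof (rule Sum_any.expand_superset[where A="{(0,0)}", THEN trans])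
      show "{ij. scale (cZ h ij) (F (fst p1 + of_nat (fst ij), snd p1 + of_nat (snd ij))
           (fst q1 - of_nat (fst ij), snd q1 - of_nat (snd ij))) \<noteq> 0} \<subseteq> {(0,0)}"
      proof
        fix ij assume "ij \<in> {ij. scale (cZ h ij) (F (fst p1 + of_nat (fst ij), snd p1 + of_nat (snd ij))
           (fst q1 - of_nat (fst ij), snd q1 - of_nat (snd ij))) \<noteq> 0}"
        then have "F (fst p1 + of_nat (fst ij), snd p1 + of_nat (snd ij))
           (fst q0 - of_nat (fst ab + fst ij), snd q0 - of_nat (snd ab + snd ij)) \<noteq> 0"
          by (simp add: q1_def algebra_simps)
        then have "(fst ab + fst ij, snd ab + snd ij) \<in> D" unfolding D_def by auto
        with abmax have "fst ab + fst ij + (snd ab + snd ij) \<le> fst ab + snd ab" by fastforce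
        then show "ij \<in> {(0,0)}" by (cases ij) auto
      qed
    qed simp_all
    also have "\<dots> = F p1 q1" by (simp add: cZ_def)
    finally show ?thesis .
  qed
  with F1 zero show False by metis
qed

end

context thm4
begin

definition Dl :: "nat \<Rightarrow> 'k \<times> 'k \<Rightarrow> 'k \<times> 'k \<Rightarrow> 'v" where
  "Dl i x y = C i x y - D i x y"

lemma C_wsupp: "i < r \<Longrightarrow> \<forall>x y. C i x y \<noteq> 0 \<longrightarrow> in_trans (0,0) y"
  using Ccre by blast

lemma Dl_supp: "i < r \<Longrightarrow> Dl i x y \<noteq> 0 \<Longrightarrow> in_trans (0,0) x \<and> in_trans (0,0) y"
  unfolding Dl_def using Ccre D_supp by (metis diff_zero diff_self)

lemma mulZW_Dl: "i < r \<Longrightarrow> mulZW scale (negp hh) (Dl i) p q = mulZW scale (negp hh) (C i) p q - mulZW scale (negp hh) (D i) p q"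
proof -
  assume i: "i < r"
  have wD: "\<forall>x y. Dl i x y \<noteq> 0 \<longrightarrow> in_trans (0,0) y" using Dl_supp[OF i] by blast
  show ?thesis
  proof (cases "in_trans (0,0) q")
    case True
    then obtain n1 n2 :: nat where q: "q = (of_nat n1, of_nat n2)" unfolding in_trans_def by auto
    show ?thesis unfolding q mulZW_box[OF wD] mulZW_box[OF C_wsupp[OF i]] mulZW_box[OF D_wsupp[OF i]]
      by (simp add: Dl_def scale_right_diff_distrib sum_subtractf)
  next
    case False
    then show ?thesis using mulZW_nonnat[OF wD] mulZW_nonnat[OF C_wsupp[OF i]] mulZW_nonnat[OF D_wsupp[OF i]] by simp
  qed
qed

lemma sumDl: "(\<Sum>i<r. mulZW scale (negp (h i)) (Dl i) p q) = 0"
proof -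
  have "(\<Sum>i<r. mulZW scale (negp (h i)) (Dl i) p q)
      = (\<Sum>i<r. mulZW scale (negp (h i)) (C i) p q) - (\<Sum>i<r. mulZW scale (negp (h i)) (D i) p q)"
    by (simp add: mulZW_Dl sum_subtractf)
  also have "\<dots> = 0"
  proof (cases "in_trans (0,0) q")
    case True
    then obtain n1 n2 :: nat where q: "q = (of_nat n1, of_nat n2)" unfolding in_trans_def by auto
    have "(\<Sum>i<r. mulZW scale (negp (h i)) (C i) p q) = a (negm1 p) (W (n1, n2) s)"
      unfolding L1[symmetric] q b_W ..
    moreover have "(\<Sum>i<r. mulZW scale (negp (h i)) (D i) p q) = a (negm1 p) (W (n1, n2) s)"
      unfolding q by (rule P2)
    ultimately show ?thesis by simp
  next
    case False
    then show ?thesis using mulZW_nonnat[OF C_wsupp] mulZW_nonnat[OF D_wsupp] by simp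
  qed
  finally show ?thesis .
qed

lemma Dl_cls: "j < r \<Longrightarrow> mulZW scale (negp (h j)) (Dl j) p q \<noteq> 0 \<Longrightarrow> Zsq (fst p + fst (h j), snd p + snd (h j))"
proof -
  assume jr: "j < r" and nzj: "mulZW scale (negp (h j)) (Dl j) p q \<noteq> 0"
  obtain k l :: nat where "Dl j (fst p + fst (h j) + of_nat k, snd p + snd (h j) + of_nat l) (fst q - of_nat k, snd q - of_nat l) \<noteq> 0"
    using nzj by (rule mulZW_nonzero_obtain)
  then have "Zsq (fst p + fst (h j) + of_nat k, snd p + snd (h j) + of_nat l)" using Dl_supp[OF jr] in_trans00_Zsq by blast
  then show ?thesis using Zsq_shift_plus[of "(fst p + fst (h j), snd p + snd (h j))"] by simp
qed

lemma Dl_zero: "i < r \<Longrightarrow> Dl i x y = 0"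
proof -
  assume i: "i < r"
  have z: "mulZW scale (negp (h i)) (Dl i) p q = 0" for p q
  proof (rule ccontr)
    assume nz: "mulZW scale (negp (h i)) (Dl i) p q \<noteq> 0"
    have "\<forall>j<r. j \<noteq> i \<longrightarrow> mulZW scale (negp (h j)) (Dl j) p q = 0"
    proof (intro allI impI, rule ccontr)
      fix j assume j: "j < r" "j \<noteq> i" and nzj: "mulZW scale (negp (h j)) (Dl j) p q \<noteq> 0"
      from Zsq_diff[OF Dl_cls[OF i nz] Dl_cls[OF j(1) nzj]]
      have "\<exists>k l::int. fst (h i) - fst (h j) = of_int k \<and> snd (h i) - snd (h j) = of_int l" by simp
      with red i j show False by blast
    qed
    then have "(\<Sum>j<r. mulZW scale (negp (h j)) (Dl j) p q) = mulZW scale (negp (h i)) (Dl i) p q"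
      by (rule sum_single_nz[OF i])
    with sumDl nz show False by simp
  qed
  have vs: "vseries2 (Dl i)" unfolding vseries2_def
    by (intro exI[of _ "{((0,0),(0,0))}"]) (use Dl_supp[OF i] in auto)
  show "Dl i x y = 0" by (rule LT0[OF vs]) (use z in blast)
qed

lemma C_eq_D: "i < r \<Longrightarrow> C i x y = D i x y"
  using Dl_zero unfolding Dl_def by (metis eq_iff_diff_eq_0)

end


context thm4
begin

lemma diagD:
  assumes i: "i < r"
  shows "diag_der scale k1 k2 (D i) (of_nat e1, of_nat e2) = W (e1, e2) (C i (of_nat k1, of_nat k2) (0,0))"
proof -
  define emb :: "nat \<times> nat \<Rightarrow> 'k \<times> 'k" where "emb P = (of_nat (fst P), of_nat (snd P))" for P
  define trm where "trm p = scale (((fst p + of_nat k1) gchoose k1) * ((snd p + of_nat k2) gchoose k2))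
      (D i (fst p + of_nat k1, snd p + of_nat k2) (of_nat e1 - fst p, of_nat e2 - snd p))" for p
  have inj: "inj emb" unfolding emb_def by (auto intro!: injI simp: prod_eq_iff)
  have "diag_der scale k1 k2 (D i) (of_nat e1, of_nat e2) = Sum_any trm"
    unfolding diag_der_def trm_def by simp
  also have "\<dots> = sum trm (emb ` ({..e1} \<times> {..e2}))"
  proof (rule Sum_any.expand_superset)
    show "finite (emb ` ({..e1} \<times> {..e2}))" by simp
    show "{p. trm p \<noteq> 0} \<subseteq> emb ` ({..e1} \<times> {..e2})"
    proof
      fix p assume "p \<in> {p. trm p \<noteq> 0}"
      then have b1: "(fst p + of_nat k1) gchoose k1 \<noteq> 0" and b2: "(snd p + of_nat k2) gchoose k2 \<noteq> 0"
        and Dnz: "D i (fst p + of_nat k1, snd p + of_nat k2) (of_nat e1 - fst p, of_nat e2 - snd p) \<noteq> 0"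
        unfolding trm_def by auto
      from D_supp[OF i Dnz] obtain X1 X2 Y1 Y2 :: nat where
        X: "fst p + of_nat k1 = of_nat X1" "snd p + of_nat k2 = of_nat X2" and
        Y: "of_nat e1 - fst p = of_nat Y1" "of_nat e2 - snd p = of_nat Y2"
        unfolding in_trans_def by auto
      have "k1 \<le> X1" using b1 X(1) gch_nat_nz by metis
      have "k2 \<le> X2" using b2 X(2) gch_nat_nz by metis
      have p1: "fst p = of_nat (X1 - k1)" using X(1) \<open>k1 \<le> X1\<close> by (simp add: of_nat_diff algebra_simps)
      have p2: "snd p = of_nat (X2 - k2)" using X(2) \<open>k2 \<le> X2\<close> by (simp add: of_nat_diff algebra_simps)
      have "(of_nat e1 :: 'k) = of_nat (X1 - k1 + Y1)" using Y(1) p1 by (simp add: algebra_simps)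
      then have "e1 = X1 - k1 + Y1" using of_nat_eq_iff by blast
      moreover have "(of_nat e2 :: 'k) = of_nat (X2 - k2 + Y2)" using Y(2) p2 by (simp add: algebra_simps)
      then have "e2 = X2 - k2 + Y2" using of_nat_eq_iff by blast
      ultimately show "p \<in> emb ` ({..e1} \<times> {..e2})"
        using p1 p2 unfolding emb_def by (intro image_eqI[of _ _ "(X1 - k1, X2 - k2)"]) (auto simp: prod_eq_iff)
    qed
  qed
  also have "\<dots> = (\<Sum>P\<in>{..e1} \<times> {..e2}. trm (emb P))"
    by (rule sum.reindex[unfolded comp_def]) (use inj in \<open>auto intro: inj_on_subset\<close>)
  also have "\<dots> = (\<Sum>P1\<le>e1. \<Sum>P2\<le>e2. trm (emb (P1, P2)))"
    by (simp add: sum.cartesian_product split_def)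
  finally have st1: "diag_der scale k1 k2 (D i) (of_nat e1, of_nat e2) = (\<Sum>P1\<le>e1. \<Sum>P2\<le>e2. trm (emb (P1, P2)))" .
  define GG where "GG P1 P2 q1 q2 = W (e1 - P1 - q1, e2 - P2 - q2)
      (scale (of_nat ((P1 + k1) choose k1) * of_nat ((P2 + k2) choose k2) *
        ((-1)^(q1 + q2) * of_nat ((P1 + k1 + q1) choose q1) * of_nat ((P2 + k2 + q2) choose q2)))
       (C i (of_nat (P1 + k1 + q1), of_nat (P2 + k2 + q2)) (0,0)))" for P1 P2 q1 q2
  have st2: "trm (emb (P1, P2)) = (\<Sum>q1\<le>e1 - P1. \<Sum>q2\<le>e2 - P2. GG P1 P2 q1 q2)" if "P1 \<le> e1" "P2 \<le> e2" for P1 P2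
  proof -
    have "trm (emb (P1, P2)) = scale (of_nat ((P1 + k1) choose k1) * of_nat ((P2 + k2) choose k2))
        (Dn i (of_nat (P1 + k1), of_nat (P2 + k2)) (e1 - P1, e2 - P2))"
      unfolding trm_def emb_def using that by (simp add: D_nat[symmetric] of_nat_diff binomial_gbinomial)
    also have "\<dots> = (\<Sum>q1\<le>e1 - P1. \<Sum>q2\<le>e2 - P2. GG P1 P2 q1 q2)"
      unfolding Dn_def GG_def by (simp add: scale_sum_right lin_scale[OF linW] binomial_gbinomial diff_diff_left algebra_simps)
    finally show ?thesis .
  qed
  define dd1 where "dd1 P1 u1 = (of_nat ((P1 + k1) choose k1) * ((-1)^(u1 - P1) * of_nat ((u1 + k1) choose (u1 - P1))) :: 'k)" for P1 u1
  define dd2 where "dd2 P2 u2 = (of_nat ((P2 + k2) choose k2) * ((-1)^(u2 - P2) * of_nat ((u2 + k2) choose (u2 - P2))) :: 'k)" for P2 u2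
  define Cu where "Cu u1 u2 = C i (of_nat (u1 + k1), of_nat (u2 + k2)) (0,0)" for u1 u2
  have "diag_der scale k1 k2 (D i) (of_nat e1, of_nat e2) = (\<Sum>P1\<le>e1. \<Sum>P2\<le>e2. \<Sum>q1\<le>e1 - P1. \<Sum>q2\<le>e2 - P2. GG P1 P2 q1 q2)"
    unfolding st1 by (intro sum.cong refl) (simp add: st2)
  also have "\<dots> = (\<Sum>u1\<le>e1. \<Sum>u2\<le>e2. \<Sum>P1\<le>u1. \<Sum>P2\<le>u2. GG P1 P2 (u1 - P1) (u2 - P2))"
    by (rule tri2)
  also have "\<dots> = (\<Sum>u1\<le>e1. \<Sum>u2\<le>e2. \<Sum>P1\<le>u1. \<Sum>P2\<le>u2. W (e1 - u1, e2 - u2) (scale (dd1 P1 u1 * dd2 P2 u2) (Cu u1 u2)))"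
  proof (intro sum.cong refl)
    fix u1 u2 P1 P2 assume "u1 \<in> {..e1}" "u2 \<in> {..e2}" "P1 \<in> {..u1}" "P2 \<in> {..u2}"
    then have le: "P1 \<le> u1" "P2 \<le> u2" by auto
    have e: "e1 - P1 - (u1 - P1) = e1 - u1" "e2 - P2 - (u2 - P2) = e2 - u2"
      "P1 + k1 + (u1 - P1) = u1 + k1" "P2 + k2 + (u2 - P2) = u2 + k2" using le by auto
    show "GG P1 P2 (u1 - P1) (u2 - P2) = W (e1 - u1, e2 - u2) (scale (dd1 P1 u1 * dd2 P2 u2) (Cu u1 u2))"
      unfolding GG_def e dd1_def dd2_def Cu_def by (simp add: power_add algebra_simps)
  qed
  also have "\<dots> = (\<Sum>u1\<le>e1. \<Sum>u2\<le>e2. W (e1 - u1, e2 - u2) (scale ((\<Sum>P1\<le>u1. dd1 P1 u1) * (\<Sum>P2\<le>u2. dd2 P2 u2)) (Cu u1 u2)))"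
    by (simp add: lin_sum[OF linW, symmetric] scale_sum_left[symmetric] sum_product)
  also have "\<dots> = (\<Sum>u1\<le>e1. \<Sum>u2\<le>e2. if u1 = 0 then (if u2 = 0 then W (e1, e2) (Cu 0 0) else 0) else 0)"
    unfolding dd1_def dd2_def dd_sum by (intro sum.cong refl) (simp add: lin_zero[OF linW])
  also have "\<dots> = (\<Sum>u1\<le>e1. if u1 = 0 then (\<Sum>u2\<le>e2. if u2 = 0 then W (e1, e2) (Cu 0 0) else 0) else 0)"
    by (rule sum.cong[OF refl]) simp
  also have "\<dots> = W (e1, e2) (Cu 0 0)" by (simp add: sum.delta)
  finally show ?thesis unfolding Cu_def by simp
qed

lemma s1_nth: "s1 one (nth_prod scale r h c n) = (\<Sum>i<r. C i (fst (h i) - 1 - fst n, snd (h i) - 1 - snd n) (0,0))"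
proof -
  have "s1 one (nth_prod scale r h c n) = a (negm1 (negm1 n)) (s1 one b)" by (simp add: partiii)
  also have "\<dots> = (\<Sum>i<r. C i (fst (h i) - 1 - fst n, snd (h i) - 1 - snd n) (0,0))"
    unfolding a_on_s f_def by (intro sum.cong refl) (simp add: negm1_def algebra_simps)
  finally show ?thesis .
qed

lemma nth_W: "nth_prod scale r h c n (negm1 (of_nat e1, of_nat e2)) one = W (e1, e2) (s1 one (nth_prod scale r h c n))"
proof -
  have "nth_prod scale r h c n (negm1 (of_nat e1, of_nat e2)) one
      = (\<Sum>i<r. W (e1, e2) (C i (fst (h i) - 1 - fst n, snd (h i) - 1 - snd n) (0,0)))"
    unfolding nth_prod_C negm1_negm1
  proof (rule sum.cong[OF refl])
    fix i assume "i \<in> {..<r}"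
    then have i: "i < r" by simp
    have CD: "C i = D i" using C_eq_D[OF i] by (simp add: fun_eq_iff)
    show "(\<Sum>k. if fst (h i) - 1 - fst n = of_nat (fst k) \<and> snd (h i) - 1 - snd n = of_nat (snd k)
          then diag_der scale (fst k) (snd k) (C i) (of_nat e1, of_nat e2) else 0)
        = W (e1, e2) (C i (fst (h i) - 1 - fst n, snd (h i) - 1 - snd n) (0,0))"
    proof (rule Sum_any_natpair)
      fix k assume "fst (h i) - 1 - fst n = of_nat (fst k)" "snd (h i) - 1 - snd n = of_nat (snd k)"
      then show "diag_der scale (fst k) (snd k) (C i) (of_nat e1, of_nat e2) = W (e1, e2) (C i (fst (h i) - 1 - fst n, snd (h i) - 1 - snd n) (0,0))"
        unfolding CD diagD[OF i] by (simp add: CD)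
    next
      assume "\<not> (\<exists>k. fst (h i) - 1 - fst n = of_nat (fst k) \<and> snd (h i) - 1 - snd n = of_nat (snd k))"
      then have "\<not> in_trans (0,0) (fst (h i) - 1 - fst n, snd (h i) - 1 - snd n)"
        unfolding in_trans_def by auto
      then have "C i (fst (h i) - 1 - fst n, snd (h i) - 1 - snd n) (0,0) = 0" using Cre_i[OF i] by blast
      then show "W (e1, e2) (C i (fst (h i) - 1 - fst n, snd (h i) - 1 - snd n) (0,0)) = 0" by (simp add: lin_zero[OF linW])
    qed
  qed
  also have "\<dots> = W (e1, e2) (s1 one (nth_prod scale r h c n))"
    unfolding s1_nth by (simp add: lin_sum[OF linW])
  finally show ?thesis .
qed

lemma partiv: "strongly_creative scale one T Tb (nth_prod scale r h c n)"
  unfolding strongly_creative_def using nth_prod_cre nth_W by (simp add: W_def)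

end


theorem mainTheorem15:
  fixes scale :: "'k::field_char_0 \<Rightarrow> 'v::ab_group_add \<Rightarrow> 'v"
    and \<sigma> :: "'v \<Rightarrow> 'v" and one :: 'v and T Tb :: "'v \<Rightarrow> 'v"
    and a b :: "('k, 'v) dist1"
    and r :: nat and h :: "nat \<Rightarrow> 'k \<times> 'k" and c :: "nat \<Rightarrow> ('k, 'v) dist2"
  assumes "super_space scale \<sigma>"
    and "even_vec \<sigma> one"
    and "even_op scale \<sigma> T" and "even_op scale \<sigma> Tb"
    and "End_dist1 scale a" and "End_dist1 scale b"
    and "creative1 one a" and "creative1 one b"
    and "mutually_local scale \<sigma> a b"
    and "reduced_OPE scale \<sigma> a b r h c"
  shows "\<forall>n. (creative1 one (nth_prod scale r h c n) \<and> (\<forall>i<r. creative2 one (c i)))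
           \<and> (\<exists>f :: nat \<Rightarrow> 'k \<times> 'k \<Rightarrow> 'v. (\<forall>i<r. \<forall>p. f i p \<noteq> 0 \<longrightarrow> in_trans (negp (h i)) p)
                 \<and> ser1 a (s1 one b) = (\<lambda>p. \<Sum>i<r. f i p))
           \<and> s1 one (nth_prod scale r h c n) = a n (s1 one b)
           \<and> (transl_cov scale T Tb a \<and> strongly_creative scale one T Tb b
                \<longrightarrow> strongly_creative scale one T Tb (nth_prod scale r h c n))"
proof -
  have vs: "vector_space scale" using assms(1) unfolding super_space_def by blast
  have ld: "local_data scale \<sigma> a b r h c" and red: "\<forall>i<r. \<forall>j<r. i \<noteq> j \<longrightarrow>
        \<not> (\<exists>k l::int. fst (h i) - fst (h j) = of_int k \<and> snd (h i) - snd (h j) = of_int l)"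
    using assms(10) unfolding reduced_OPE_def by blast+
  have ctx: "thm_ctx scale \<sigma> one a b r h c"
    unfolding thm_ctx_def thm_ctx_axioms_def vsk_def using vs ld red assms(5-8) by blast
  interpret thm_ctx scale \<sigma> one a b r h c by (rule ctx)
  have linT: "Vector_Spaces.linear scale scale T" using assms(3) unfolding even_op_def by blast
  have linTb: "Vector_Spaces.linear scale scale Tb" using assms(4) unfolding even_op_def by blast
  show ?thesis
  proof (rule allI)
    fix n
    have c1: "creative1 one (nth_prod scale r h c n)" by (rule nth_prod_cre)
    have c2: "\<forall>i<r. creative2 one (c i)" by (rule creative_c)
    have c3: "\<exists>f :: nat \<Rightarrow> 'k \<times> 'k \<Rightarrow> 'v. (\<forall>i<r. \<forall>p. f i p \<noteq> 0 \<longrightarrow> in_trans (negp (h i)) p)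
                 \<and> ser1 a (s1 one b) = (\<lambda>p. \<Sum>i<r. f i p)" by (rule partii)
    have c4: "s1 one (nth_prod scale r h c n) = a n (s1 one b)" by (rule partiii)
    have c5: "transl_cov scale T Tb a \<and> strongly_creative scale one T Tb b
                \<longrightarrow> strongly_creative scale one T Tb (nth_prod scale r h c n)"
    proof
      assume tcsc: "transl_cov scale T Tb a \<and> strongly_creative scale one T Tb b"
      have t4: "thm4 scale \<sigma> one a b r h c T Tb"
        unfolding thm4_def thm4_axioms_def using ctx linT linTb tcsc by blast
      interpret t: thm4 scale \<sigma> one a b r h c T Tb by (rule t4)
      show "strongly_creative scale one T Tb (nth_prod scale r h c n)" by (rule t.partiv)
    qed
    show "(creative1 one (nth_prod scale r h c n) \<and> (\<forall>i<r. creative2 one (c i)))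
           \<and> (\<exists>f :: nat \<Rightarrow> 'k \<times> 'k \<Rightarrow> 'v. (\<forall>i<r. \<forall>p. f i p \<noteq> 0 \<longrightarrow> in_trans (negp (h i)) p)
                 \<and> ser1 a (s1 one b) = (\<lambda>p. \<Sum>i<r. f i p))
           \<and> s1 one (nth_prod scale r h c n) = a n (s1 one b)
           \<and> (transl_cov scale T Tb a \<and> strongly_creative scale one T Tb b
                \<longrightarrow> strongly_creative scale one T Tb (nth_prod scale r h c n))"
      using c1 c2 c3 c4 c5 by blast
  qed
qed


end
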